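(* Let $g$ solve system (S3) with initial data $h_{ii}>0$ satisfying either $h_{11}=h_{22}<h_{33}$, or $h_{11}<h_{22}=h_{33}<4h_{11}$. Then the solution exists for all $t\ge0$, and, with $\kappa = (4\det h - h_{00}h_{22}^3)\,h_{00}^3h_{22}$: (i) $(4\det h - g_{00}g_{22}^3)\,g_{00}^3g_{22} = \kappa$ for all $t$; (ii) $g_{00}\to (\kappa/3)^{3/8}(\det h)^{-1/2}$ and $g_{11},g_{22},g_{33}\to (3/\kappa)^{1/8}(\det h)^{1/2}$ as $t\to\infty$; (iii) if $h_{11}=h_{22}$, then $g_{11}$ and $g_{22}$ are increasing and $g_{33}$ is decreasing; (iv) if $h_{22}=h_{33}$, then $g_{11}$ is increasing.
   Context: Let $\det h = h_{00}h_{11}h_{22}h_{33}$, $\beta=\frac{1}{6(\det h)^2}$, and $p(x,y,z) = x^4 - x^3(y+z) + x^2yz + x(-y^3+y^2z+yz^2-z^3) + y^4 - y^3z - yz^3 + z^4$, $q(x,y,z) = 5x^4 - 3x^3(y+z) + x^2yz + x(y^3-y^2z-yz^2+z^3) - 3y^4 + 3y^3z + 3yz^3 - 3z^4$. System (S3): $\dot g_{00} = -\beta\,p(g_{11},g_{22},g_{33})\,g_{00}^3$, $\dot g_{11} = -\beta\,q(g_{11},g_{22},g_{33})\,g_{00}^2g_{11}$, $\dot g_{22} = -\beta\,q(g_{22},g_{33},g_{11})\,g_{00}^2g_{22}$, $\dot g_{33} = -\beta\,q(g_{33},g_{11},g_{22})\,g_{00}^2g_{33}$, $g_{ii}(0)=h_{ii}$.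 This is Bach flow $\partial_tg=B$ on $\mathbb{R}\times\mathbb{S}^3$ in a diagonalizing left-invariant frame $\{\partial_0,e_1,e_2,e_3\}$ with $[e_i,e_j]=\sum_k\varepsilon_{ijk}e_k$ and $g=\mathrm{diag}(g_{00},g_{11},g_{22},g_{33})$; along the flow $g_{00}g_{11}g_{22}g_{33}=\det h$. *)

theory Defs
  imports "HOL-Analysis.Analysis"
begin

definition bach_p :: "real \<Rightarrow> real \<Rightarrow> real \<Rightarrow> real" where
  "bach_p x y z = x^4 - x^3*(y+z) + x^2*y*z + x*(-(y^3) + y^2*z + y*z^2 - z^3)
                  + y^4 - y^3*z - y*z^3 + z^4"

definition bach_q :: "real \<Rightarrow> real \<Rightarrow> real \<Rightarrow> real" where
  "bach_q x y z = 5*x^4 - 3*x^3*(y+z) + x^2*y*z + x*(y^3 - y^2*z - y*z^2 + z^3)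
                  - 3*y^4 + 3*y^3*z + 3*y*z^3 - 3*z^4"

text \<open>det h = h00 h11 h22 h33 and beta = 1 / (6 (det h)^2).\<close>
definition bach_beta :: "real \<Rightarrow> real" where
  "bach_beta dh = 1 / (6 * dh^2)"

definition solves_S3 ::
  "real \<Rightarrow> real \<Rightarrow> real \<Rightarrow> real \<Rightarrow>
   (real \<Rightarrow> real) \<Rightarrow> (real \<Rightarrow> real) \<Rightarrow> (real \<Rightarrow> real) \<Rightarrow> (real \<Rightarrow> real) \<Rightarrow> bool" where
  "solves_S3 h0 h1 h2 h3 g0 g1 g2 g3 \<longleftrightarrow>
     (let \<beta> = bach_beta (h0*h1*h2*h3) in
      g0 0 = h0 \<and> g1 0 = h1 \<and> g2 0 = h2 \<and> g3 0 = h3 \<and>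
      (\<forall>t\<ge>0.
        (g0 has_real_derivative (- \<beta> * bach_p (g1 t) (g2 t) (g3 t) * (g0 t)^3)) (at t within {0..}) \<and>
        (g1 has_real_derivative (- \<beta> * bach_q (g1 t) (g2 t) (g3 t) * (g0 t)^2 * g1 t)) (at t within {0..}) \<and>
        (g2 has_real_derivative (- \<beta> * bach_q (g2 t) (g3 t) (g1 t) * (g0 t)^2 * g2 t)) (at t within {0..}) \<and>
        (g3 has_real_derivative (- \<beta> * bach_q (g3 t) (g1 t) (g2 t) * (g0 t)^2 * g3 t)) (at t within {0..})))"

end

theory Submission
  imports Defs
begin



lemma deriv_within_to_at:
  assumes "(f has_real_derivative d) (at t within {0..})" "t > 0"
  shows "(f has_real_derivative d) (at t)"
proof -
  have "t \<in> interior {0..}" using assms(2) by simp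
  then show ?thesis using assms(1) at_within_interior by metis
qed

lemma cont_from_deriv:
  assumes "\<forall>t\<ge>0. (f has_real_derivative f' t) (at t within {0..})"
  shows "continuous_on {0..} f"
  unfolding continuous_on_eq_continuous_within
  using assms has_field_derivative_imp_has_derivative has_derivative_continuous by fastforce

lemma mvt_within:
  assumes d: "\<forall>t\<ge>0. (f has_real_derivative f' t) (at t within {0..})"
    and "0 \<le> a" "a < b"
  shows "\<exists>z. a < z \<and> z < b \<and> f b - f a = (b - a) * f' z"
proof -
  have c: "continuous_on {a..b} f"
    using cont_from_deriv[OF d] continuous_on_subset assms(2) by fastforce
  have "\<exists>l z. a < z \<and> z < b \<and> DERIV f z :> l \<and> f b - f a = (b - a) * l"
  proof (rule MVT[OF \<open>a<b\<close> c])
    fix x assume "a < x" "x < b"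
    then have "(f has_real_derivative f' x) (at x)" using d deriv_within_to_at assms(2) by auto
    then show "f differentiable (at x)" using real_differentiable_def by blast
  qed
  then obtain l z where "a < z" "z < b" "DERIV f z :> l" "f b - f a = (b - a) * l" by blast
  moreover have "DERIV f z :> f' z" using d deriv_within_to_at \<open>a<z\<close> assms(2) by auto
  ultimately show ?thesis using DERIV_unique by metis
qed

lemma strict_mono_from_deriv:
  assumes d: "\<forall>t\<ge>0. (f has_real_derivative f' t) (at t within {0..})"
    and p: "\<forall>t\<ge>0. f' t > 0"
  shows "strict_mono_on {0..} f"
proof (rule strict_mono_onI)
  fix r s :: real assume "r \<in> {0..}" "s \<in> {0..}" "r < s"
  then obtain z where "r < z" "z < s" "f s - f r = (s - r) * f' z" using mvt_within[OF d] by auto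
  moreover have "f' z > 0" using p \<open>r \<in> {0..}\<close> \<open>r < z\<close> by auto
  ultimately show "f r < f s" using \<open>r<s\<close>
    by (metis diff_gt_0_iff_gt mult_pos_pos)
qed

lemma strict_antimono_from_deriv:
  assumes d: "\<forall>t\<ge>0. (f has_real_derivative f' t) (at t within {0..})"
    and p: "\<forall>t\<ge>0. f' t < 0"
  shows "strict_antimono_on {0..} f"
  unfolding monotone_on_def
proof (intro ballI impI)
  fix r s :: real assume "r \<in> {0..}" "s \<in> {0..}" "r < s"
  then have "r \<in> {0..} \<and> s \<in> {0..} \<and> r < s" by simp
  then obtain z where "r < z" "z < s" "f s - f r = (s - r) * f' z" using mvt_within[OF d] by auto
  moreover have "f' z < 0" using p \<open>r \<in> {0..} \<and> s \<in> {0..} \<and> r < s\<close> \<open>r < z\<close> by auto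
  ultimately show "f s < f r" using \<open>r \<in> {0..} \<and> s \<in> {0..} \<and> r < s\<close>
    by (metis diff_gt_0_iff_gt diff_less_0_iff_less mult_pos_neg)
qed

lemma nonincr_from_deriv:
  assumes d: "\<forall>t\<ge>0. (f has_real_derivative f' t) (at t within {0..})"
    and p: "\<forall>t\<ge>0. f' t \<le> 0" and "0 \<le> r" "r \<le> s"
  shows "f s \<le> f r"
proof (cases "r = s")
  case False
  then have "r < s" using assms by simp
  then obtain z where "r < z" "z < s" "f s - f r = (s - r) * f' z" using mvt_within[OF d \<open>0\<le>r\<close> \<open>r<s\<close>] by auto
  moreover have "f' z \<le> 0" using p assms \<open>r < z\<close> by auto
  ultimately show ?thesis using \<open>r<s\<close> by (metis diff_ge_0_iff_ge diff_le_0_iff_le less_eq_real_def mult_nonneg_nonpos)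
qed simp

lemma lin_ode_exp:
  assumes d: "\<forall>t\<ge>0. (v has_real_derivative k t * v t) (at t within {0..})"
    and ck: "continuous_on {0..} k" and T: "T \<ge> 0"
  shows "\<exists>c. v T = v 0 * exp c"
proof -
  define S where "S = {0..T}"
  define K where "K s = integral {0..s} k" for s
  have ckS: "continuous_on {0..T} k" using ck continuous_on_subset by fastforce
  have dK: "(K has_real_derivative k s) (at s within S)" if "s \<in> S" for s
    using integral_has_vector_derivative[OF ckS, of s] that
    unfolding K_def S_def has_real_derivative_iff_has_vector_derivative by simp
  have dv: "(v has_real_derivative k s * v s) (at s within S)" if "s \<in> S" for s
    using d that unfolding S_def by (auto intro: has_field_derivative_subset)
  have "((\<lambda>s. v s * exp (- K s)) has_real_derivative 0) (at s within S)" if "s \<in> S" for s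
  proof -
    have e: "((\<lambda>s. exp (- K s)) has_real_derivative exp (- K s) * (- k s)) (at s within S)"
      using DERIV_chain2[OF DERIV_exp DERIV_minus[OF dK[OF that]]] by simp
    show ?thesis using DERIV_mult[OF dv[OF that] e] by (simp add: algebra_simps)
  qed
  then obtain c where c: "\<forall>s\<in>S. v s * exp (- K s) = c"
    using has_field_derivative_zero_constant[of S "\<lambda>s. v s * exp (- K s)"]
    unfolding S_def by (auto simp: convex_real_interval)
  have "0 \<in> S" "T \<in> S" using T unfolding S_def by auto
  then have "v T * exp (- K T) = v 0" using c unfolding K_def by auto
  then have "v T = v 0 * exp (K T)" by (metis exp_minus_inverse mult.assoc mult.commute mult_1)
  then show ?thesis by blast
qed




lemma scalar_ode_inc:
  fixes G :: "real \<Rightarrow> real" and a b r0 :: real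
  assumes ar: "a < r0" and rb: "r0 < b" and cG: "continuous_on {a..b} G"
    and pos: "\<And>s. a \<le> s \<Longrightarrow> s \<le> b \<Longrightarrow> G s > 0"
  shows "\<exists>\<rho>. \<rho> 0 = r0 \<and> (\<forall>t\<ge>0. r0 \<le> \<rho> t \<and> \<rho> t < b \<and>
            (\<rho> has_real_derivative (b - \<rho> t) * G (\<rho> t)) (at t))"
proof -
  define f where "f s = 1 / ((b - s) * G s)" for s
  have cf: "continuous_on {a..c} f" if "c < b" for c
  proof -
    have "continuous_on {a..c} G" by (rule continuous_on_subset[OF cG]) (use that in auto)
    moreover have "\<forall>s\<in>{a..c}. (b - s) * G s \<noteq> 0" using pos that by fastforce
    ultimately show ?thesis unfolding f_def by (intro continuous_intros) auto
  qed
  define I where "I s = integral {a..s} f" for s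
  have dI: "(I has_real_derivative f s) (at s)" if "a < s" "s < b" for s
  proof -
    define c where "c = (s + b) / 2"
    have "c < b" "s < c" using that unfolding c_def by auto
    have "(I has_real_derivative f s) (at s within {a..c})"
      using integral_has_vector_derivative[OF cf[OF \<open>c<b\<close>], of s] that \<open>s<c\<close>
      unfolding I_def has_real_derivative_iff_has_vector_derivative by simp
    moreover have "s \<in> interior {a..c}" using that \<open>s<c\<close> by simp
    ultimately show ?thesis using at_within_interior by metis
  qed
  define T where "T s = I s - I r0" for s
  have dT: "(T has_real_derivative f s) (at s)" if "a < s" "s < b" for s
    unfolding T_def using DERIV_diff[OF dI[OF that] DERIV_const] by simp
  have fpos: "f s > 0" if "a \<le> s" "s < b" for s
    using pos[of s] that unfolding f_def by simp
  have Tmono: "T s1 < T s2" if "a < s1" "s1 < s2" "s2 < b" for s1 s2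
  proof (rule DERIV_pos_imp_increasing[OF \<open>s1<s2\<close>])
    fix x assume "s1 \<le> x" "x \<le> s2"
    then have x: "a < x" "x < b" using that by auto
    show "\<exists>y. DERIV T x :> y \<and> y > 0"
      using dT[OF x] fpos[of x] x by (intro exI[of _ "f x"]) auto
  qed
  have Tr0: "T r0 = 0" unfolding T_def by simp
  have "bounded (G ` {a..b})" by (intro compact_imp_bounded compact_continuous_image cG) auto
  then obtain M0 where M0: "\<forall>y\<in>G ` {a..b}. norm y \<le> M0" using bounded_iff by blast
  define M where "M = max M0 1"
  have Mpos: "M > 0" unfolding M_def by simp
  have GM: "G s \<le> M" if "a \<le> s" "s \<le> b" for s
  proof -
    have "norm (G s) \<le> M0" using M0 that by auto
    then show ?thesis unfolding M_def by (metis abs_ge_self max.coboundedI1 order_trans real_norm_def)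
  qed
  have lowT: "T s \<ge> (ln (b - r0) - ln (b - s)) / M" if "r0 \<le> s" "s < b" for s
  proof -
    define H where "H x = T x + ln (b - x) / M" for x
    have "H r0 \<le> H s"
    proof (rule DERIV_nonneg_imp_nondecreasing[OF \<open>r0 \<le> s\<close>])
      fix x assume x: "r0 \<le> x" "x \<le> s"
      have dl: "((\<lambda>x. ln (b - x) / M) has_real_derivative (inverse (b - x) * (- 1)) / M) (at x)"
        using x that by (intro DERIV_cdivide DERIV_chain2[OF DERIV_ln] derivative_eq_intros) auto
      have "(H has_real_derivative f x + (inverse (b - x) * (- 1)) / M) (at x)"
        unfolding H_def using DERIV_add[OF dT dl] x that ar by auto
      moreover have "f x + (inverse (b - x) * (- 1)) / M \<ge> 0"
      proof -
        have "0 < G x" "G x \<le> M" using pos GM x that ar by auto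
        moreover have "b - x > 0" using x that by auto
        ultimately have "1 / ((b - x) * M) \<le> 1 / ((b - x) * G x)"
          by (intro divide_left_mono mult_left_mono mult_pos_pos) auto
        then show ?thesis unfolding f_def by (simp add: field_simps)
      qed
      ultimately show "\<exists>y. DERIV H x :> y \<and> 0 \<le> y" by blast
    qed
    then show ?thesis unfolding H_def using Tr0 Mpos by (simp add: field_simps)
  qed
  have reach: "\<exists>s2. r0 \<le> s2 \<and> s2 < b \<and> t < T s2" for t
  proof (cases "t < 0")
    case True then show ?thesis using Tr0 rb by (intro exI[of _ r0]) auto
  next
    case False
    define s2 where "s2 = b - (b - r0) * exp (- M * (t + 1))"
    have e1: "exp (- M * (t + 1)) < 1" using Mpos False by (simp add: mult_pos_pos)
    have "(b - r0) * exp (- M * (t + 1)) < b - r0" using e1 rb by simp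
    then have s2a: "r0 < s2" unfolding s2_def by simp
    have s2b: "s2 < b" unfolding s2_def using rb by simp
    have "ln (b - s2) = ln (b - r0) - M * (t + 1)"
      unfolding s2_def using rb by (simp add: ln_mult)
    then have "M * (t + 1) \<le> M * T s2" using lowT[of s2] s2a s2b Mpos by (simp add: field_simps)
    then have "T s2 \<ge> t + 1" using Mpos by simp
    then show ?thesis using s2a s2b by (intro exI[of _ s2]) auto
  qed
  define m where "m = (a + r0) / 2"
  have m: "a < m" "m < r0" unfolding m_def using ar by auto
  have Tm: "T m < 0" using Tmono[of m r0] m rb Tr0 by auto
  have uniq: "s = s'" if "m < s" "s < b" "m < s'" "s' < b" "T s = T s'" for s s'
    using Tmono[of s s'] Tmono[of s' s] that m by (cases s s' rule: linorder_cases) auto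
  have ex: "\<exists>s. m < s \<and> s < b \<and> T s = t" if "T m < t" for t
  proof -
    obtain s2 where s2: "r0 \<le> s2" "s2 < b" "t < T s2" using reach by blast
    have "\<exists>x. m \<le> x \<and> x \<le> s2 \<and> T x = t"
    proof (rule IVT)
      show "T m \<le> t" "t \<le> T s2" "m \<le> s2" using m s2 that by auto
      show "\<forall>x. m \<le> x \<and> x \<le> s2 \<longrightarrow> isCont T x"
      proof (intro allI impI)
        fix x assume "m \<le> x \<and> x \<le> s2"
        then have "a < x" "x < b" using m s2 by auto
        then show "isCont T x" using dT DERIV_isCont by blast
      qed
    qed
    then obtain x where "m \<le> x" "x \<le> s2" "T x = t" by blast
    moreover have "x \<noteq> m" using that \<open>T x = t\<close> by auto
    ultimately show ?thesis using s2 by (intro exI[of _ x]) auto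
  qed
  define \<rho> where "\<rho> t = (THE s. m < s \<and> s < b \<and> T s = t)" for t
  have \<rho>prop: "m < \<rho> t \<and> \<rho> t < b \<and> T (\<rho> t) = t" if "T m < t" for t
  proof -
    have "\<exists>!s. m < s \<and> s < b \<and> T s = t" using ex[OF that] uniq by blast
    then show ?thesis unfolding \<rho>_def by (rule theI')
  qed
  have \<rho>T: "\<rho> (T z) = z" if "m < z" "z < b" for z
  proof -
    have "T m < T z" using Tmono[of m z] that m by auto
    then show ?thesis using \<rho>prop[of "T z"] uniq[of "\<rho> (T z)" z] that by auto
  qed
  have der: "(\<rho> has_real_derivative (b - \<rho> t) * G (\<rho> t)) (at t)" if "t \<ge> 0" for t
  proof -
    have t: "T m < t" using Tm that by simp
    note pt = \<rho>prop[OF t]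
    have ct: "isCont \<rho> t"
    proof -
      define d where "d = min (\<rho> t - m) (b - \<rho> t) / 2"
      have d: "d > 0" unfolding d_def using pt by auto
      have "isCont \<rho> (T (\<rho> t))"
      proof (rule isCont_inverse_function[OF d, where f = T and g = \<rho> and x = "\<rho> t"])
        fix z assume "\<bar>z - \<rho> t\<bar> \<le> d"
        then have "\<bar>z - \<rho> t\<bar> * 2 \<le> \<rho> t - m" "\<bar>z - \<rho> t\<bar> * 2 \<le> b - \<rho> t"
          unfolding d_def by auto
        then have z1: "m < z"
          using conjunct1[OF pt] by (simp add: abs_if split: if_splits)
        have z2: "z < b"
          using \<open>\<bar>z - \<rho> t\<bar> * 2 \<le> b - \<rho> t\<close> conjunct1[OF conjunct2[OF pt]] by (simp add: abs_if split: if_splits)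
        note z = z1 z2
        show "\<rho> (T z) = z" using \<rho>T[OF z] .
        show "isCont T z" using dT[of z] z m by (auto intro: DERIV_isCont)
      qed
      then show ?thesis using pt by simp
    qed
    have "DERIV \<rho> t :> inverse (f (\<rho> t))"
    proof (rule DERIV_inverse_function[where a = "T m" and b = "t + 1"])
      show "DERIV T (\<rho> t) :> f (\<rho> t)" using dT pt m by auto
      show "f (\<rho> t) \<noteq> 0" using fpos[of "\<rho> t"] pt m by auto
      show "T m < t" "t < t + 1" using t by auto
      show "T (\<rho> y) = y" if "T m < y" "y < t + 1" for y using \<rho>prop that by auto
      show "isCont \<rho> t" by (rule ct)
    qed
    then show ?thesis unfolding f_def by simp
  qed
  have r00: "\<rho> 0 = r0" using \<rho>T[of r0] m rb Tr0 by simp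
  have ge: "r0 \<le> \<rho> t" if "t \<ge> 0" for t
  proof (rule ccontr)
    assume "\<not> r0 \<le> \<rho> t"
    moreover have "T m < t" using Tm that by simp
    moreover have p: "m < \<rho> t" "T (\<rho> t) = t" using \<rho>prop[OF \<open>T m < t\<close>] by auto
    ultimately have "T (\<rho> t) < T r0" using Tmono[of "\<rho> t" r0] m rb by auto
    then show False using \<rho>prop[of t] Tm that Tr0 by auto
  qed
  have lt: "\<rho> t < b" if "t \<ge> 0" for t using \<rho>prop[of t] Tm that by auto
  show ?thesis
    using r00 ge der lt by (intro exI[of _ \<rho>]) blast
qed




lemma deriv_eq: "(f has_real_derivative a) F \<Longrightarrow> a = b \<Longrightarrow> (f has_real_derivative b) F"
  by simp

lemma decay_to_0:
  fixes u u' :: "real \<Rightarrow> real"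
  assumes d: "\<forall>t\<ge>0. (u has_real_derivative u' t) (at t within {0..})"
    and up: "\<forall>t\<ge>0. u t > 0" and un: "\<forall>t\<ge>0. u' t \<le> 0"
    and ub: "\<And>\<epsilon>. \<epsilon> > 0 \<Longrightarrow> \<exists>c>0. \<forall>t\<ge>0. u t \<ge> \<epsilon> \<longrightarrow> u' t \<le> - c"
  shows "(u \<longlongrightarrow> 0) at_top"
  unfolding tendsto_iff eventually_at_top_linorder
proof (intro allI impI)
  fix \<epsilon> :: real assume e: "\<epsilon> > 0"
  obtain c where c: "c > 0" "\<forall>t\<ge>0. u t \<ge> \<epsilon> \<longrightarrow> u' t \<le> - c" using ub[OF e] by blast
  have "\<exists>t1\<ge>0. u t1 < \<epsilon>"
  proof (rule ccontr)
    assume "\<not> ?thesis"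
    then have all: "\<forall>t\<ge>0. u t \<ge> \<epsilon>" by (simp add: not_less)
    have dH: "\<forall>t\<ge>0. ((\<lambda>t. u t + c * t) has_real_derivative u' t + c) (at t within {0..})"
      using d by (auto intro!: DERIV_add DERIV_cmult[OF DERIV_ident, of c, simplified])
    have "\<forall>t\<ge>0. u' t + c \<le> 0" using all c by force
    then have "u (u 0 / c) + c * (u 0 / c) \<le> u 0 + c * 0"
      using nonincr_from_deriv[OF dH, of 0 "u 0 / c"] up c by (auto simp: less_imp_le)
    then have "u (u 0 / c) \<le> 0" using c by simp
    moreover have "u (u 0 / c) > 0" using up c by (auto simp: less_imp_le)
    ultimately show False by simp
  qed
  then obtain t1 where t1: "t1 \<ge> 0" "u t1 < \<epsilon>" by blast
  show "\<exists>N. \<forall>n\<ge>N. dist (u n) 0 < \<epsilon>"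
  proof (intro exI allI impI)
    fix t assume "t1 \<le> t"
    then have "u t \<le> u t1" using nonincr_from_deriv[OF d un] t1 by auto
    moreover have "u t > 0" using up t1 \<open>t1 \<le> t\<close> by auto
    ultimately show "dist (u t) 0 < \<epsilon>" using t1 by simp
  qed
qed

lemma powr_limit_eq1:
  fixes D \<kappa> :: real assumes "D > 0" "\<kappa> > 0"
  shows "(D ^ 4 * 1 ^ 4 * (4 * 1 - 1) / \<kappa>) powr (1/8) = (3/\<kappa>) powr (1/8) * D powr (1/2)"
proof -
  have e: "D ^ 4 * 1 ^ 4 * (4 * 1 - 1) / \<kappa> = (3/\<kappa>) * (D powr 4)"
    using assms by (simp add: field_simps)
  have "(D ^ 4 * 1 ^ 4 * (4 * 1 - 1) / \<kappa>) powr (1/8) = (3/\<kappa>) powr (1/8) * (D powr 4) powr (1/8)"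
    unfolding e by (rule powr_mult)
  also have "(D powr 4) powr (1/8) = D powr (1/2)" by (simp add: powr_powr)
  finally show ?thesis .
qed

lemma powr_limit_eq2:
  fixes D \<kappa> :: real assumes "D > 0" "\<kappa> > 0"
  shows "D / ((3/\<kappa>) powr (1/8) * D powr (1/2)) ^ 3 = (\<kappa>/3) powr (3/8) * D powr (-1/2)"
proof -
  have "((3/\<kappa>) powr (1/8) * D powr (1/2)) ^ 3 = (3/\<kappa>) powr (3/8) * D powr (3/2)"
    using assms by (simp add: power_mult_distrib powr_realpow[symmetric] powr_powr)
  moreover have "(3/\<kappa>) powr (3/8) = 1 / (\<kappa>/3) powr (3/8)"
    using assms by (simp add: powr_divide)
  moreover have "D / D powr (3/2) = D powr (-1/2)"
  proof -
    have "D powr (3/2) = D powr (1 + 1/2)" by simp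
    also have "\<dots> = D powr 1 * D powr (1/2)" by (rule powr_add)
    finally have "D powr (3/2) = D * D powr (1/2)" using assms by simp
    moreover have "D powr (-1/2) = 1 / D powr (1/2)" using assms by (simp add: powr_minus_divide)
    ultimately show ?thesis using assms by simp
  qed
  ultimately show ?thesis using assms by (simp add: field_simps)
qed




lemma deriv_eq_all:
  "\<forall>t\<ge>0. (f has_real_derivative a t) (at t within {0..}) \<Longrightarrow> (\<And>t. t \<ge> 0 \<Longrightarrow> a t = b t)
   \<Longrightarrow> \<forall>t\<ge>0. (f has_real_derivative b t) (at t within {0..})"
  by simp

lemma sign_of_lin:
  assumes "\<forall>t\<ge>0. (v has_real_derivative k t * v t) (at t within {0..})" "continuous_on {0..} k"
  shows "\<forall>t\<ge>0. (v 0 > 0 \<longrightarrow> v t > 0) \<and> (v 0 < 0 \<longrightarrow> v t < 0) \<and> (v 0 = 0 \<longrightarrow> v t = 0)"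
proof (intro allI impI)
  fix t :: real assume "t \<ge> 0"
  then obtain c where "v t = v 0 * exp c" using lin_ode_exp[OF assms] by blast
  then show "(v 0 > 0 \<longrightarrow> v t > 0) \<and> (v 0 < 0 \<longrightarrow> v t < 0) \<and> (v 0 = 0 \<longrightarrow> v t = 0)"
    by (simp add: mult_pos_pos mult_neg_pos)
qed

lemma const_from_deriv0:
  assumes "\<forall>t\<ge>0. (f has_real_derivative 0) (at t within {0..})"
  shows "\<forall>t\<ge>0. f t = f 0"
proof -
  obtain c where "\<forall>t\<in>{0..}. f t = c"
    using has_field_derivative_zero_constant[of "{0..}" f] assms by (auto simp: convex_real_interval)
  then show ?thesis by auto
qed

lemma id_prod: fixes b w x y :: real shows
 "((- b * (x^2 * (x - y)^2) * w^3) * x + (- b * (x^2 * (5 * x - y) * (x - y)) * w^2 * x) * w) * y^2 +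
  (of_nat 2 * ((- b * (- (x^2 * (y - x) * (y - 3 * x))) * w^2 * y) * y^(2 - Suc 0))) * (w * x) = 0"
  by (simp add: numeral_eq_Suc) algebra
lemma id_Q: fixes b w x y :: real shows
 "((of_nat 4 * ((- b * (x^2 * (x - y)^2) * w^3) * w^(4 - Suc 0))) * y^3 +
       (of_nat 3 * ((- b * (- (x^2 * (y - x) * (y - 3 * x))) * w^2 * y) * y^(3 - Suc 0))) * w^4)
       * (4 * x - y) +
      (4 * (- b * (x^2 * (5 * x - y) * (x - y)) * w^2 * x) -
       (- b * (- (x^2 * (y - x) * (y - 3 * x))) * w^2 * y)) * (w^4 * y^3) = 0"
  by (simp add: numeral_eq_Suc) algebra
lemma id_d: fixes b w x y :: real shows
 "(- b * (x^2 * (5 * x - y) * (x - y)) * w^2 * x) - (- b * (- (x^2 * (y - x) * (y - 3 * x))) * w^2 * y)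
  = (- b * x^2 * w^2 * (5 * x^2 + 2 * x * y - y^2)) * (x - y)"
  by algebra
lemma id_e: fixes b w x y :: real shows
 "4 * (- b * (x^2 * (5 * x - y) * (x - y)) * w^2 * x) - (- b * (- (x^2 * (y - x) * (y - 3 * x))) * w^2 * y)
  = (- b * x^2 * w^2 * (x - y) * (5 * x + y)) * (4 * x - y)"
  by algebra
lemma id_Q0: fixes w x y :: real shows
  "w^4 * y^3 * (4 * x - y) = (4*(w * x * y^2) - w * y^3) * w^3 * y"
  by algebra

lemma id_r: fixes b w x y :: real assumes "w \<noteq> 0" "x \<noteq> 0" "y \<noteq> 0" and b: "b = 1 / (6 * (w * x * y^2)^2)"
  shows "((- b * (x^2 * (5 * x - y) * (x - y)) * w^2 * x) * y - x * (- b * (- (x^2 * (y - x) * (y - 3 * x))) * w^2 * y)) / (y * y)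
     = -(1/3) * (x / y) * (x / y - 1) * (4 * (x / y) - 1) / y^2"
  using assms by (simp add: field_simps) algebra

lemma id_y8: fixes w x y :: real assumes "w \<noteq> 0" "x \<noteq> 0" "y \<noteq> 0"
  shows "y^8 * ((x / y)^4 * (w^4 * y^3 * (4 * x - y))) = (w*x*y^2)^4 * (4 * (x / y) - 1)"
  using assms by (simp add: field_simps) algebra

lemma id_x8: fixes w x y :: real assumes "w \<noteq> 0" "x \<noteq> 0" "y \<noteq> 0"
  shows "x^8 * (w^4 * y^3 * (4 * x - y)) = (w*x*y^2)^4 * (x / y)^4 * (4 * (x / y) - 1)"
  using assms by (simp add: field_simps) algebra

lemma root8: fixes z :: real assumes "z > 0" shows "(z ^ 8) powr (1/8) = z"
proof -
  have e: "z powr real 8 = z ^ 8" by (rule powr_realpow[OF assms])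
  have "(z ^ 8) powr (1/8) = z powr (real 8 * (1/8))" unfolding e[symmetric] by (rule powr_powr)
  then show ?thesis using assms by simp
qed

lemma reduced_props:
  fixes w x y :: "real \<Rightarrow> real" and D \<beta> \<kappa> :: real
  assumes pos0: "w 0 > 0" "x 0 > 0" "y 0 > 0" and ne: "x 0 \<noteq> y 0" and q4: "y 0 < 4 * x 0"
    and Ddef: "D = w 0 * x 0 * (y 0)^2" and \<beta>def: "\<beta> = 1 / (6 * D^2)"
    and \<kappa>def: "\<kappa> = (4*D - w 0 * (y 0)^3) * (w 0)^3 * y 0"
    and dw: "\<forall>t\<ge>0. (w has_real_derivative (- \<beta> * (x t^2 * (x t - y t)^2) * (w t)^3)) (at t within {0..})"
    and dx: "\<forall>t\<ge>0. (x has_real_derivative (- \<beta> * (x t^2 * (5 * x t - y t) * (x t - y t)) * (w t)^2 * x t)) (at t within {0..})"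
    and dy: "\<forall>t\<ge>0. (y has_real_derivative (- \<beta> * (- (x t^2 * (y t - x t) * (y t - 3 * x t))) * (w t)^2 * y t)) (at t within {0..})"
  shows "(\<forall>t\<ge>0. (4*D - w t * (y t)^3) * (w t)^3 * y t = \<kappa>) \<and>
     (w \<longlongrightarrow> (\<kappa>/3) powr (3/8) * D powr (-1/2)) at_top \<and>
     (x \<longlongrightarrow> (3/\<kappa>) powr (1/8) * D powr (1/2)) at_top \<and>
     (y \<longlongrightarrow> (3/\<kappa>) powr (1/8) * D powr (1/2)) at_top \<and>
     (x 0 > y 0 \<longrightarrow> strict_mono_on {0..} y \<and> strict_antimono_on {0..} x) \<and>
     (x 0 < y 0 \<longrightarrow> strict_mono_on {0..} x)"
proof -
  have cw: "continuous_on {0..} w" using cont_from_deriv[OF dw] .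
  have cx: "continuous_on {0..} x" using cont_from_deriv[OF dx] .
  have cy: "continuous_on {0..} y" using cont_from_deriv[OF dy] .
  have Dpos: "D > 0" using pos0 Ddef by simp
  have \<beta>pos: "\<beta> > 0" using Dpos \<beta>def by simp
  have wpos: "\<forall>t\<ge>0. w t > 0"
  proof -
    have "\<forall>t\<ge>0. (w has_real_derivative (- \<beta> * (x t^2 * (x t - y t)^2) * (w t)^2) * w t) (at t within {0..})"
      by (rule deriv_eq_all[OF dw]) (simp add: power2_eq_square power3_eq_cube)
    moreover have "continuous_on {0..} (\<lambda>t. - \<beta> * (x t^2 * (x t - y t)^2) * (w t)^2)"
      by (intro continuous_intros cw cx cy)
    ultimately have "\<forall>t\<ge>0. (w 0 > 0 \<longrightarrow> w t > 0) \<and> (w 0 < 0 \<longrightarrow> w t < 0) \<and> (w 0 = 0 \<longrightarrow> w t = 0)"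
      by (rule sign_of_lin)
    then show ?thesis using pos0 by auto
  qed
  have xpos: "\<forall>t\<ge>0. x t > 0"
  proof -
    have "\<forall>t\<ge>0. (x has_real_derivative (- \<beta> * (x t^2 * (5 * x t - y t) * (x t - y t)) * (w t)^2) * x t) (at t within {0..})"
      by (rule deriv_eq_all[OF dx]) simp
    moreover have "continuous_on {0..} (\<lambda>t. - \<beta> * (x t^2 * (5 * x t - y t) * (x t - y t)) * (w t)^2)"
      by (intro continuous_intros cw cx cy)
    ultimately have "\<forall>t\<ge>0. (x 0 > 0 \<longrightarrow> x t > 0) \<and> (x 0 < 0 \<longrightarrow> x t < 0) \<and> (x 0 = 0 \<longrightarrow> x t = 0)"
      by (rule sign_of_lin)
    then show ?thesis using pos0 by auto
  qed
  have ypos: "\<forall>t\<ge>0. y t > 0"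
  proof -
    have "\<forall>t\<ge>0. (y has_real_derivative (- \<beta> * (- (x t^2 * (y t - x t) * (y t - 3 * x t))) * (w t)^2) * y t) (at t within {0..})"
      by (rule deriv_eq_all[OF dy]) simp
    moreover have "continuous_on {0..} (\<lambda>t. - \<beta> * (- (x t^2 * (y t - x t) * (y t - 3 * x t))) * (w t)^2)"
      by (intro continuous_intros cw cx cy)
    ultimately have "\<forall>t\<ge>0. (y 0 > 0 \<longrightarrow> y t > 0) \<and> (y 0 < 0 \<longrightarrow> y t < 0) \<and> (y 0 = 0 \<longrightarrow> y t = 0)"
      by (rule sign_of_lin)
    then show ?thesis using pos0 by auto
  qed
  have dsign: "\<forall>t\<ge>0. (x 0 - y 0 > 0 \<longrightarrow> x t - y t > 0) \<and> (x 0 - y 0 < 0 \<longrightarrow> x t - y t < 0)"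
  proof -
    have "\<forall>t\<ge>0. ((\<lambda>t. x t - y t) has_real_derivative
       (- \<beta> * (x t^2 * (5 * x t - y t) * (x t - y t)) * (w t)^2 * x t) -
       (- \<beta> * (- (x t^2 * (y t - x t) * (y t - 3 * x t))) * (w t)^2 * y t)) (at t within {0..})"
      using dx dy by (auto intro: DERIV_diff)
    then have "\<forall>t\<ge>0. ((\<lambda>t. x t - y t) has_real_derivative
       (- \<beta> * (x t)^2 * (w t)^2 * (5 * (x t)^2 + 2 * x t * y t - (y t)^2)) * (x t - y t)) (at t within {0..})"
      by (rule deriv_eq_all) (rule id_d[of \<beta>])
    moreover have "continuous_on {0..} (\<lambda>t. - \<beta> * (x t)^2 * (w t)^2 * (5 * (x t)^2 + 2 * x t * y t - (y t)^2))"
      by (intro continuous_intros cw cx cy)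
    ultimately have "\<forall>t\<ge>0. (x 0 - y 0 > 0 \<longrightarrow> x t - y t > 0) \<and> (x 0 - y 0 < 0 \<longrightarrow> x t - y t < 0) \<and> (x 0 - y 0 = 0 \<longrightarrow> x t - y t = 0)"
      by (rule sign_of_lin)
    then show ?thesis by auto
  qed
  have esign: "\<forall>t\<ge>0. 4 * x t - y t > 0"
  proof -
    have "\<forall>t\<ge>0. ((\<lambda>t. 4 * x t - y t) has_real_derivative
       4 * (- \<beta> * (x t^2 * (5 * x t - y t) * (x t - y t)) * (w t)^2 * x t) -
       (- \<beta> * (- (x t^2 * (y t - x t) * (y t - 3 * x t))) * (w t)^2 * y t)) (at t within {0..})"
    proof (intro allI impI)
      fix t :: real assume t: "t \<ge> 0"
      show "((\<lambda>t. 4 * x t - y t) has_real_derivative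
       4 * (- \<beta> * (x t^2 * (5 * x t - y t) * (x t - y t)) * (w t)^2 * x t) -
       (- \<beta> * (- (x t^2 * (y t - x t) * (y t - 3 * x t))) * (w t)^2 * y t)) (at t within {0..})"
        by (rule DERIV_diff[OF DERIV_cmult[OF dx[rule_format, OF t]] dy[rule_format, OF t]])
    qed
    then have "\<forall>t\<ge>0. ((\<lambda>t. 4 * x t - y t) has_real_derivative
       (- \<beta> * (x t)^2 * (w t)^2 * (x t - y t) * (5 * x t + y t)) * (4 * x t - y t)) (at t within {0..})"
      by (rule deriv_eq_all) (rule id_e[of \<beta>])
    moreover have "continuous_on {0..} (\<lambda>t. - \<beta> * (x t)^2 * (w t)^2 * (x t - y t) * (5 * x t + y t))"
      by (intro continuous_intros cw cx cy)
    ultimately have "\<forall>t\<ge>0. (4 * x 0 - y 0 > 0 \<longrightarrow> 4 * x t - y t > 0) \<and> (4 * x 0 - y 0 < 0 \<longrightarrow> 4 * x t - y t < 0) \<and> (4 * x 0 - y 0 = 0 \<longrightarrow> 4 * x t - y t = 0)"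
      by (rule sign_of_lin)
    then show ?thesis using q4 by auto
  qed
  have prod: "\<forall>t\<ge>0. w t * x t * (y t)^2 = D"
  proof -
    have "\<forall>t\<ge>0. ((\<lambda>t. w t * x t * (y t)^2) has_real_derivative
      ((- \<beta> * (x t^2 * (x t - y t)^2) * (w t)^3) * x t +
        (- \<beta> * (x t^2 * (5 * x t - y t) * (x t - y t)) * (w t)^2 * x t) * w t) * (y t)^2 +
      (of_nat 2 * ((- \<beta> * (- (x t^2 * (y t - x t) * (y t - 3 * x t))) * (w t)^2 * y t) * (y t)^(2 - Suc 0))) * (w t * x t))
      (at t within {0..})"
    proof (intro allI impI)
      fix t :: real assume t: "t \<ge> 0"
      show "((\<lambda>t. w t * x t * (y t)^2) has_real_derivative
      ((- \<beta> * (x t^2 * (x t - y t)^2) * (w t)^3) * x t +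
        (- \<beta> * (x t^2 * (5 * x t - y t) * (x t - y t)) * (w t)^2 * x t) * w t) * (y t)^2 +
      (of_nat 2 * ((- \<beta> * (- (x t^2 * (y t - x t) * (y t - 3 * x t))) * (w t)^2 * y t) * (y t)^(2 - Suc 0))) * (w t * x t))
      (at t within {0..})"
        by (rule DERIV_mult[OF DERIV_mult[OF dw[rule_format, OF t] dx[rule_format, OF t]] DERIV_power[OF dy[rule_format, OF t]]])
    qed
    then have "\<forall>t\<ge>0. ((\<lambda>t. w t * x t * (y t)^2) has_real_derivative 0) (at t within {0..})"
      by (rule deriv_eq_all) (rule id_prod[of \<beta>])
    then have "\<forall>t\<ge>0. w t * x t * (y t)^2 = w 0 * x 0 * (y 0)^2" by (rule const_from_deriv0)
    then show ?thesis unfolding Ddef .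
  qed
  have Qinv: "\<forall>t\<ge>0. (w t)^4 * (y t)^3 * (4 * x t - y t) = \<kappa>"
  proof -
    have "\<forall>t\<ge>0. ((\<lambda>t. (w t)^4 * (y t)^3 * (4 * x t - y t)) has_real_derivative
      ((of_nat 4 * ((- \<beta> * (x t^2 * (x t - y t)^2) * (w t)^3) * (w t)^(4 - Suc 0))) * (y t)^3 +
       (of_nat 3 * ((- \<beta> * (- (x t^2 * (y t - x t) * (y t - 3 * x t))) * (w t)^2 * y t) * (y t)^(3 - Suc 0))) * (w t)^4)
       * (4 * x t - y t) +
      (4 * (- \<beta> * (x t^2 * (5 * x t - y t) * (x t - y t)) * (w t)^2 * x t) -
       (- \<beta> * (- (x t^2 * (y t - x t) * (y t - 3 * x t))) * (w t)^2 * y t)) * ((w t)^4 * (y t)^3))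
      (at t within {0..})"
    proof (intro allI impI)
      fix t :: real assume t: "t \<ge> 0"
      show "((\<lambda>t. (w t)^4 * (y t)^3 * (4 * x t - y t)) has_real_derivative
      ((of_nat 4 * ((- \<beta> * (x t^2 * (x t - y t)^2) * (w t)^3) * (w t)^(4 - Suc 0))) * (y t)^3 +
       (of_nat 3 * ((- \<beta> * (- (x t^2 * (y t - x t) * (y t - 3 * x t))) * (w t)^2 * y t) * (y t)^(3 - Suc 0))) * (w t)^4)
       * (4 * x t - y t) +
      (4 * (- \<beta> * (x t^2 * (5 * x t - y t) * (x t - y t)) * (w t)^2 * x t) -
       (- \<beta> * (- (x t^2 * (y t - x t) * (y t - 3 * x t))) * (w t)^2 * y t)) * ((w t)^4 * (y t)^3))
      (at t within {0..})"
        by (rule DERIV_mult[OF DERIV_mult[OF DERIV_power[OF dw[rule_format, OF t]] DERIV_power[OF dy[rule_format, OF t]]]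
              DERIV_diff[OF DERIV_cmult[OF dx[rule_format, OF t]] dy[rule_format, OF t]]])
    qed
    then have "\<forall>t\<ge>0. ((\<lambda>t. (w t)^4 * (y t)^3 * (4 * x t - y t)) has_real_derivative 0) (at t within {0..})"
      by (rule deriv_eq_all) (rule id_Q[of \<beta>])
    moreover have "(w 0)^4 * (y 0)^3 * (4 * x 0 - y 0) = \<kappa>"
      unfolding \<kappa>def Ddef by (rule id_Q0)
    moreover have "\<forall>t\<ge>0. (w t)^4 * (y t)^3 * (4 * x t - y t) = (w 0)^4 * (y 0)^3 * (4 * x 0 - y 0)"
      using calculation(1) by (rule const_from_deriv0)
    ultimately show ?thesis by (metis (no_types, lifting))
  qed
  have inv1: "\<forall>t\<ge>0. (4*D - w t * (y t)^3) * (w t)^3 * y t = \<kappa>"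
  proof (intro allI impI)
    fix t :: real assume t: "t \<ge> 0"
    have "(4*D - w t * (y t)^3) * (w t)^3 * y t = (w t)^4 * (y t)^3 * (4 * x t - y t)"
      unfolding prod[rule_format, OF t, symmetric] by (rule id_Q0[symmetric])
    then show "(4*D - w t * (y t)^3) * (w t)^3 * y t = \<kappa>" using Qinv t by simp
  qed
  have \<kappa>pos: "\<kappa> > 0" using Qinv[rule_format, of 0] pos0 q4 by auto
  define \<sigma> :: real where "\<sigma> = (if x 0 > y 0 then 1 else -1)"
  define r where "r = (\<lambda>t. x t / y t)"
  define u where "u = (\<lambda>t. \<sigma> * (r t - 1))"
  have \<sigma>sq: "\<sigma> * \<sigma> = 1" by (simp add: \<sigma>_def)
  have \<beta>t: "\<beta> = 1 / (6 * (w t * x t * (y t)^2)^2)" if "t \<ge> 0" for t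
    using \<beta>def prod that by simp
  have dr: "\<forall>t\<ge>0. (r has_real_derivative -(1/3) * r t * (r t - 1) * (4 * r t - 1) / (y t)^2) (at t within {0..})"
  proof (intro allI impI)
    fix t :: real assume t: "t \<ge> 0"
    have ne: "w t \<noteq> 0" "x t \<noteq> 0" "y t \<noteq> 0" using wpos xpos ypos t by auto
    have "((\<lambda>t. x t / y t) has_real_derivative
      ((- \<beta> * (x t^2 * (5 * x t - y t) * (x t - y t)) * (w t)^2 * x t) * y t -
        x t * (- \<beta> * (- (x t^2 * (y t - x t) * (y t - 3 * x t))) * (w t)^2 * y t)) / (y t * y t)) (at t within {0..})"
      by (rule DERIV_divide[OF dx[rule_format, OF t] dy[rule_format, OF t] ne(3)])
    also have "((- \<beta> * (x t^2 * (5 * x t - y t) * (x t - y t)) * (w t)^2 * x t) * y t -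
        x t * (- \<beta> * (- (x t^2 * (y t - x t) * (y t - 3 * x t))) * (w t)^2 * y t)) / (y t * y t)
      = -(1/3) * (x t / y t) * (x t / y t - 1) * (4 * (x t / y t) - 1) / (y t)^2"
      by (rule id_r[OF ne \<beta>t[OF t]])
    finally show "(r has_real_derivative -(1/3) * r t * (r t - 1) * (4 * r t - 1) / (y t)^2) (at t within {0..})"
      unfolding r_def by simp
  qed
  have du: "\<forall>t\<ge>0. (u has_real_derivative -(1/3) * r t * u t * (4 * r t - 1) / (y t)^2) (at t within {0..})"
  proof (intro allI impI)
    fix t :: real assume t: "t \<ge> 0"
    have "(u has_real_derivative \<sigma> * (-(1/3) * r t * (r t - 1) * (4 * r t - 1) / (y t)^2 - 0)) (at t within {0..})"
      unfolding u_def by (rule DERIV_cmult[OF DERIV_diff[OF dr[rule_format, OF t] DERIV_const]])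
    then show "(u has_real_derivative -(1/3) * r t * u t * (4 * r t - 1) / (y t)^2) (at t within {0..})"
      unfolding u_def by (simp add: algebra_simps)
  qed
  have rpos: "\<forall>t\<ge>0. r t > 0" using xpos ypos unfolding r_def by simp
  have r4: "\<forall>t\<ge>0. 4 * r t - 1 > 0"
  proof (intro allI impI)
    fix t :: real assume t: "t \<ge> 0"
    have "y t > 0" using ypos t by simp
    then have "4 * r t - 1 = (4 * x t - y t) / y t" unfolding r_def by (simp add: field_simps)
    then show "4 * r t - 1 > 0" using esign ypos t by simp
  qed
  have upos: "\<forall>t\<ge>0. u t > 0"
  proof (intro allI impI)
    fix t :: real assume t: "t \<ge> 0"
    show "u t > 0"
    proof (cases "x 0 > y 0")
      case True
      then have "x t > y t" using dsign t by auto
      then have "r t > 1" using ypos t unfolding r_def by simp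
      then show ?thesis using True unfolding u_def \<sigma>_def by simp
    next
      case False
      then have "x 0 < y 0" using ne by simp
      then have "x t < y t" using dsign t by auto
      then have "r t < 1" using ypos t unfolding r_def by simp
      then show ?thesis using False unfolding u_def \<sigma>_def by simp
    qed
  qed
  have un: "\<forall>t\<ge>0. -(1/3) * r t * u t * (4 * r t - 1) / (y t)^2 \<le> 0"
  proof (intro allI impI)
    fix t :: real assume t: "t \<ge> 0"
    have "r t > 0" "u t > 0" "4 * r t - 1 > 0" "y t > 0" using rpos upos r4 ypos t by auto
    then have "0 < r t * u t * (4 * r t - 1) / (y t)^2" by (intro divide_pos_pos mult_pos_pos) auto
    moreover have "-(1/3) * r t * u t * (4 * r t - 1) / (y t)^2 = -(1/3) * (r t * u t * (4 * r t - 1) / (y t)^2)"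
      by simp
    ultimately show "-(1/3) * r t * u t * (4 * r t - 1) / (y t)^2 \<le> 0" by linarith
  qed
  have ule: "\<forall>t\<ge>0. u t \<le> u 0" using nonincr_from_deriv[OF du un] by auto
  have rexp: "r t = 1 + \<sigma> * u t" for t
  proof -
    have "1 + \<sigma> * u t = 1 + (\<sigma> * \<sigma>) * (r t - 1)" unfolding u_def by (simp add: algebra_simps)
    then show ?thesis using \<sigma>sq by simp
  qed
  define rmin where "rmin = min (r 0) 1"
  define rmax where "rmax = max (r 0) 1"
  have rb: "\<forall>t\<ge>0. rmin \<le> r t \<and> r t \<le> rmax"
  proof (intro allI impI)
    fix t :: real assume t: "t \<ge> 0"
    have "0 < u t" "u t \<le> u 0" using upos ule t by auto
    then show "rmin \<le> r t \<and> r t \<le> rmax"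
      unfolding rmin_def rmax_def using rexp[of t] rexp[of 0]
      by (cases "x 0 > y 0") (auto simp: \<sigma>_def)
  qed
  have rmin4: "4 * rmin - 1 > 0"
  proof -
    have "4 * r 0 - 1 > 0" using r4 by auto
    then show ?thesis unfolding rmin_def by (simp add: min_def)
  qed
  have rminpos: "rmin > 0" using rmin4 by simp
  have rmaxpos: "rmax > 0" unfolding rmax_def by simp
  define C where "C = D^4 * (4 * rmax) / (rmin^4 * \<kappa>)"
  define Y2 where "Y2 = max 1 C"
  have Y2pos: "Y2 > 0" unfolding Y2_def by simp
  have yb: "\<forall>t\<ge>0. (y t)^2 \<le> Y2"
  proof (intro allI impI)
    fix t :: real assume t: "t \<ge> 0"
    have ne: "w t \<noteq> 0" "x t \<noteq> 0" "y t \<noteq> 0" using wpos xpos ypos t by auto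
    have e: "(y t)^8 * ((r t)^4 * \<kappa>) = D^4 * (4 * r t - 1)"
      using id_y8[OF ne] Qinv[rule_format, OF t] prod[rule_format, OF t] unfolding r_def by simp
    have rt: "r t > 0" using rpos t by simp
    have den: "(r t)^4 * \<kappa> > 0" using rt \<kappa>pos by simp
    then have y8: "(y t)^8 = D^4 * (4 * r t - 1) / ((r t)^4 * \<kappa>)" using e rt \<kappa>pos by (simp add: eq_divide_eq)
    have "D^4 * (4 * r t - 1) / ((r t)^4 * \<kappa>) \<le> D^4 * (4 * rmax) / (rmin^4 * \<kappa>)"
    proof (rule frac_le)
      show "0 \<le> D^4 * (4 * rmax)" using rmaxpos by simp
      have rbt: "rmin \<le> r t" "r t \<le> rmax" using rb t by auto
      show "D^4 * (4 * r t - 1) \<le> D^4 * (4 * rmax)" using rbt by (intro mult_left_mono) auto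
      show "0 < rmin^4 * \<kappa>" using rminpos \<kappa>pos by simp
      show "rmin^4 * \<kappa> \<le> (r t)^4 * \<kappa>" using rbt rminpos \<kappa>pos by (intro mult_right_mono power_mono) auto
    qed
    then have y8C: "(y t)^8 \<le> C" unfolding C_def y8 .
    show "(y t)^2 \<le> Y2"
    proof (cases "(y t)^2 \<le> 1")
      case True then show ?thesis unfolding Y2_def by simp
    next
      case False
      then have "(y t)^2 \<le> ((y t)^2)^4" by (intro self_le_power) auto
      also have "\<dots> = (y t)^8" by (simp add: power_mult[symmetric])
      finally show ?thesis using y8C unfolding Y2_def by simp
    qed
  qed
  have u0: "(u \<longlongrightarrow> 0) at_top"
  proof (rule decay_to_0[OF du upos un])
    fix \<epsilon> :: real assume e: "\<epsilon> > 0"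
    define c where "c = (1/3) * (rmin * \<epsilon> * (4 * rmin - 1) / Y2)"
    have cpos: "c > 0" unfolding c_def using e rminpos rmin4 Y2pos by simp
    have "\<forall>t\<ge>0. u t \<ge> \<epsilon> \<longrightarrow> -(1/3) * r t * u t * (4 * r t - 1) / (y t)^2 \<le> - c"
    proof (intro allI impI)
      fix t :: real assume t: "t \<ge> 0" and ue: "u t \<ge> \<epsilon>"
      have rt: "r t > 0" "u t > 0" "4 * r t - 1 > 0" "y t > 0" "rmin \<le> r t" "(y t)^2 \<le> Y2"
        using rpos upos r4 ypos rb yb t by auto
      have "rmin * \<epsilon> * (4 * rmin - 1) / Y2 \<le> r t * u t * (4 * r t - 1) / (y t)^2"
      proof (rule frac_le)
        show "0 \<le> r t * u t * (4 * r t - 1)" using rt by simp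
        have m1: "rmin * \<epsilon> \<le> r t * u t" using rt ue e rminpos by (intro mult_mono) auto
        have m2: "4 * rmin - 1 \<le> 4 * r t - 1" using rt by simp
        have m3: "0 \<le> r t * u t" using rt by simp
        show "rmin * \<epsilon> * (4 * rmin - 1) \<le> r t * u t * (4 * r t - 1)"
          using rmin4 by (intro mult_mono[OF m1 m2 m3]) simp
        show "0 < (y t)^2" using rt by simp
        show "(y t)^2 \<le> Y2" using rt by simp
      qed
      moreover have "-(1/3) * r t * u t * (4 * r t - 1) / (y t)^2 = -(1/3) * (r t * u t * (4 * r t - 1) / (y t)^2)"
        by simp
      ultimately show "-(1/3) * r t * u t * (4 * r t - 1) / (y t)^2 \<le> - c" unfolding c_def by linarith
    qed
    then show "\<exists>c>0. \<forall>t\<ge>0. u t \<ge> \<epsilon> \<longrightarrow> -(1/3) * r t * u t * (4 * r t - 1) / (y t)^2 \<le> - c"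
      using cpos by blast
  qed
  have r1: "(r \<longlongrightarrow> 1) at_top"
  proof -
    have "((\<lambda>t. 1 + \<sigma> * u t) \<longlongrightarrow> 1 + \<sigma> * 0) at_top"
      by (intro tendsto_intros u0)
    moreover have "r = (\<lambda>t. 1 + \<sigma> * u t)" using rexp by auto
    ultimately show ?thesis by simp
  qed
  have ev: "eventually (\<lambda>t::real. t \<ge> 0) at_top" unfolding eventually_at_top_linorder by auto
  define X where "X = (3/\<kappa>) powr (1/8) * D powr (1/2)"
  have xform: "\<forall>t\<ge>0. x t = (D^4 * (r t)^4 * (4 * r t - 1) / \<kappa>) powr (1/8)"
  proof (intro allI impI)
    fix t :: real assume t: "t \<ge> 0"
    have ne: "w t \<noteq> 0" "x t \<noteq> 0" "y t \<noteq> 0" using wpos xpos ypos t by auto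
    have e: "(x t)^8 * \<kappa> = D^4 * (r t)^4 * (4 * r t - 1)"
      using id_x8[OF ne] Qinv[rule_format, OF t] prod[rule_format, OF t] unfolding r_def by simp
    then have "(x t)^8 = D^4 * (r t)^4 * (4 * r t - 1) / \<kappa>" using \<kappa>pos by (simp add: eq_divide_eq)
    then show "x t = (D^4 * (r t)^4 * (4 * r t - 1) / \<kappa>) powr (1/8)"
      using root8[of "x t"] xpos t by simp
  qed
  have xlim: "(x \<longlongrightarrow> X) at_top"
  proof -
    have "((\<lambda>t. (D^4 * (r t)^4 * (4 * r t - 1) / \<kappa>) powr (1/8)) \<longlongrightarrow>
          (D^4 * 1^4 * (4 * 1 - 1) / \<kappa>) powr (1/8)) at_top"
      using Dpos \<kappa>pos by (intro tendsto_powr tendsto_intros r1) auto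
    then have "((\<lambda>t. (D^4 * (r t)^4 * (4 * r t - 1) / \<kappa>) powr (1/8)) \<longlongrightarrow> X) at_top"
      unfolding X_def powr_limit_eq1[OF Dpos \<kappa>pos] .
    moreover have "eventually (\<lambda>t. (D^4 * (r t)^4 * (4 * r t - 1) / \<kappa>) powr (1/8) = x t) at_top"
      using ev by (rule eventually_mono) (use xform in auto)
    ultimately show ?thesis by (rule Lim_transform_eventually)
  qed
  have ylim: "(y \<longlongrightarrow> X) at_top"
  proof -
    have "((\<lambda>t. x t / r t) \<longlongrightarrow> X / 1) at_top" by (intro tendsto_intros xlim r1) simp
    moreover have "eventually (\<lambda>t. x t / r t = y t) at_top"
      using ev by (rule eventually_mono) (use xpos ypos in \<open>auto simp: r_def\<close>)
    ultimately show ?thesis by (simp add: Lim_transform_eventually)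
  qed
  have Xpos: "X > 0" unfolding X_def using Dpos \<kappa>pos by simp
  have wlim: "(w \<longlongrightarrow> (\<kappa>/3) powr (3/8) * D powr (-1/2)) at_top"
  proof -
    have "((\<lambda>t. D / (x t * (y t)^2)) \<longlongrightarrow> D / (X * X^2)) at_top"
      using Xpos by (intro tendsto_intros xlim ylim) simp
    moreover have "D / (X * X^2) = (\<kappa>/3) powr (3/8) * D powr (-1/2)"
      using powr_limit_eq2[OF Dpos \<kappa>pos] unfolding X_def by (simp add: power3_eq_cube power2_eq_square)
    moreover have "eventually (\<lambda>t. D / (x t * (y t)^2) = w t) at_top"
      using ev
    proof (rule eventually_mono)
      fix t :: real assume t: "t \<ge> 0"
      have "x t > 0" "y t > 0" "w t * x t * (y t)^2 = D" using xpos ypos prod t by auto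
      then show "D / (x t * (y t)^2) = w t" by (simp add: field_simps)
    qed
    ultimately show ?thesis by (metis Lim_transform_eventually)
  qed
  have mono1: "x 0 > y 0 \<longrightarrow> strict_mono_on {0..} y \<and> strict_antimono_on {0..} x"
  proof
    assume gt: "x 0 > y 0"
    have "\<forall>t\<ge>0. - \<beta> * (- (x t^2 * (y t - x t) * (y t - 3 * x t))) * (w t)^2 * y t > 0"
    proof (intro allI impI)
      fix t :: real assume t: "t \<ge> 0"
      have "x t > y t" using dsign gt t by auto
      then have p: "(y t - x t) * (y t - 3 * x t) > 0" using xpos t by (intro mult_neg_neg) auto
      have q: "x t > 0" "w t > 0" "y t > 0" using xpos wpos ypos t by auto
      have "x t^2 * ((y t - x t) * (y t - 3 * x t)) * (w t)^2 * y t > 0"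
        using mult_pos_pos[OF mult_pos_pos[OF mult_pos_pos[OF _ p] _] q(3)] q by simp
      then show "- \<beta> * (- (x t^2 * (y t - x t) * (y t - 3 * x t))) * (w t)^2 * y t > 0"
        using \<beta>pos by (simp add: mult.assoc)
    qed
    then have "strict_mono_on {0..} y" by (rule strict_mono_from_deriv[OF dy])
    moreover have "\<forall>t\<ge>0. - \<beta> * (x t^2 * (5 * x t - y t) * (x t - y t)) * (w t)^2 * x t < 0"
    proof (intro allI impI)
      fix t :: real assume t: "t \<ge> 0"
      have "x t > y t" using dsign gt t by auto
      then have p: "(5 * x t - y t) * (x t - y t) > 0" using xpos t by (intro mult_pos_pos) auto
      have q: "x t > 0" "w t > 0" "y t > 0" using xpos wpos ypos t by auto
      have "x t^2 * ((5 * x t - y t) * (x t - y t)) * (w t)^2 * x t > 0"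
        using mult_pos_pos[OF mult_pos_pos[OF mult_pos_pos[OF _ p] _] q(1)] q by simp
      then show "- \<beta> * (x t^2 * (5 * x t - y t) * (x t - y t)) * (w t)^2 * x t < 0"
        using \<beta>pos by (simp add: mult.assoc)
    qed
    then have "strict_antimono_on {0..} x" by (rule strict_antimono_from_deriv[OF dx])
    ultimately show "strict_mono_on {0..} y \<and> strict_antimono_on {0..} x" ..
  qed
  have mono2: "x 0 < y 0 \<longrightarrow> strict_mono_on {0..} x"
  proof
    assume lt: "x 0 < y 0"
    have "\<forall>t\<ge>0. - \<beta> * (x t^2 * (5 * x t - y t) * (x t - y t)) * (w t)^2 * x t > 0"
    proof (intro allI impI)
      fix t :: real assume t: "t \<ge> 0"
      have "x t < y t" using dsign lt t by auto
      moreover have "5 * x t - y t > 0" using esign xpos t by force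
      ultimately have p: "(5 * x t - y t) * (x t - y t) < 0" by (intro mult_pos_neg) auto
      have q: "x t > 0" "w t > 0" "y t > 0" using xpos wpos ypos t by auto
      have p': "- ((5 * x t - y t) * (x t - y t)) > 0" using p by simp
      have "x t^2 * (- ((5 * x t - y t) * (x t - y t))) * (w t)^2 * x t > 0"
        using mult_pos_pos[OF mult_pos_pos[OF mult_pos_pos[OF _ p'] _] q(1)] q by simp
      then show "- \<beta> * (x t^2 * (5 * x t - y t) * (x t - y t)) * (w t)^2 * x t > 0"
        using \<beta>pos by (simp add: mult.assoc mult_pos_neg)
    qed
    then show "strict_mono_on {0..} x" by (rule strict_mono_from_deriv[OF dx])
  qed
  show ?thesis using inv1 wlim xlim ylim mono1 mono2 unfolding X_def by blast
qed




lemma id_ex_x: fixes p s D \<kappa> L :: real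
  assumes "p \<noteq> 0" "s \<noteq> 0" "4 * s - 1 \<noteq> 0" "D \<noteq> 0" "\<kappa> \<noteq> 0"
  shows "p * (0 * L + (D^4 * (4 * s^3 * (4 * s - 1) + s^4 * 4) * ((1 - s) * (s^3 * (4 * s - 1) / (3 * p^2))) / \<kappa>) * (1/8) / (D^4 * s^4 * (4 * s - 1) / \<kappa>))
   = - (1 / (6 * D^2)) * (p^2 * (5 * p - p / s) * (p - p / s)) * (D * s^2 / p^3)^2 * p"
  using assms by (simp add: field_simps) algebra

lemma id_ex_y: fixes p s D \<kappa> p' L :: real
  assumes "p \<noteq> 0" "s \<noteq> 0" "4 * s - 1 \<noteq> 0" "D \<noteq> 0" "\<kappa> \<noteq> 0"
   and p': "p' = p * (0 * L + (D^4 * (4 * s^3 * (4 * s - 1) + s^4 * 4) * ((1 - s) * (s^3 * (4 * s - 1) / (3 * p^2))) / \<kappa>) * (1/8) / (D^4 * s^4 * (4 * s - 1) / \<kappa>))"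
  shows "(p' * s - p * ((1 - s) * (s^3 * (4 * s - 1) / (3 * p^2)))) / (s * s)
   = - (1 / (6 * D^2)) * (- (p^2 * (p / s - p) * (p / s - 3 * p))) * (D * s^2 / p^3)^2 * (p / s)"
  using assms by (simp add: field_simps) algebra

lemma id_ex_w: fixes p s D \<kappa> p' L :: real
  assumes "p \<noteq> 0" "s \<noteq> 0" "4 * s - 1 \<noteq> 0" "D \<noteq> 0" "\<kappa> \<noteq> 0"
   and p': "p' = p * (0 * L + (D^4 * (4 * s^3 * (4 * s - 1) + s^4 * 4) * ((1 - s) * (s^3 * (4 * s - 1) / (3 * p^2))) / \<kappa>) * (1/8) / (D^4 * s^4 * (4 * s - 1) / \<kappa>))"
  shows "(D * (of_nat 2 * (((1 - s) * (s^3 * (4 * s - 1) / (3 * p^2))) * s^(2 - Suc 0))) * p^3 - D * s^2 * (of_nat 3 * (p' * p^(3 - Suc 0)))) / (p^3 * p^3)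
   = - (1 / (6 * D^2)) * (p^2 * (p - p / s)^2) * (D * s^2 / p^3)^3"
  using assms by (simp add: field_simps numeral_eq_Suc) algebra

lemma id_dA: fixes D R s :: real
  shows "D^4 * (of_nat 4 * (R * s^(4 - Suc 0))) * (4 * s - 1) + (4 * R - 0) * (D^4 * s^4)
    = D^4 * (4 * s^3 * (4 * s - 1) + s^4 * 4) * R"
  by (simp add: numeral_eq_Suc) algebra

lemma ex_derivs:
  fixes \<rho> :: "real \<Rightarrow> real" and D \<kappa> t :: real and P :: "real \<Rightarrow> real"
  assumes Pdef: "P = (\<lambda>s. (D^4 * s^4 * (4 * s - 1) / \<kappa>) powr (1/8))"
    and d\<rho>: "(\<rho> has_real_derivative (1 - \<rho> t) * ((\<rho> t)^3 * (4 * \<rho> t - 1) / (3 * (P (\<rho> t))^2))) (at t)"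
    and s: "\<rho> t > 1/4" and D: "D > 0" and \<kappa>: "\<kappa> > 0"
  shows "((\<lambda>t. P (\<rho> t)) has_real_derivative
           - (1 / (6 * D^2)) * ((P (\<rho> t))^2 * (5 * P (\<rho> t) - P (\<rho> t) / \<rho> t) * (P (\<rho> t) - P (\<rho> t) / \<rho> t)) * (D * (\<rho> t)^2 / (P (\<rho> t))^3)^2 * P (\<rho> t)) (at t)"
    and "((\<lambda>t. P (\<rho> t) / \<rho> t) has_real_derivative
           - (1 / (6 * D^2)) * (- ((P (\<rho> t))^2 * (P (\<rho> t) / \<rho> t - P (\<rho> t)) * (P (\<rho> t) / \<rho> t - 3 * P (\<rho> t)))) * (D * (\<rho> t)^2 / (P (\<rho> t))^3)^2 * (P (\<rho> t) / \<rho> t)) (at t)"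
    and "((\<lambda>t. D * (\<rho> t)^2 / (P (\<rho> t))^3) has_real_derivative
           - (1 / (6 * D^2)) * ((P (\<rho> t))^2 * (P (\<rho> t) - P (\<rho> t) / \<rho> t)^2) * (D * (\<rho> t)^2 / (P (\<rho> t))^3)^3) (at t)"
proof -
  define R where "R = (1 - \<rho> t) * ((\<rho> t)^3 * (4 * \<rho> t - 1) / (3 * (P (\<rho> t))^2))"
  have Apos: "D^4 * (\<rho> t)^4 * (4 * \<rho> t - 1) / \<kappa> > 0" using s D \<kappa> by simp
  have pp: "P (\<rho> t) > 0" using Apos s D \<kappa> unfolding Pdef by simp
  have ne: "P (\<rho> t) \<noteq> 0" "\<rho> t \<noteq> 0" "4 * \<rho> t - 1 \<noteq> 0" "D \<noteq> 0" "\<kappa> \<noteq> 0" using pp s D \<kappa> by auto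
  have dA0: "((\<lambda>t. D^4 * (\<rho> t)^4 * (4 * \<rho> t - 1) / \<kappa>) has_real_derivative
      (D^4 * (of_nat 4 * (R * (\<rho> t)^(4 - Suc 0))) * (4 * \<rho> t - 1) + (4 * R - 0) * (D^4 * (\<rho> t)^4)) / \<kappa>) (at t)"
    unfolding R_def
    by (rule DERIV_cdivide[OF DERIV_mult[OF DERIV_cmult[OF DERIV_power[OF d\<rho>]] DERIV_diff[OF DERIV_cmult[OF d\<rho>] DERIV_const]]])
  have dA: "((\<lambda>t. D^4 * (\<rho> t)^4 * (4 * \<rho> t - 1) / \<kappa>) has_real_derivative
      D^4 * (4 * (\<rho> t)^3 * (4 * \<rho> t - 1) + (\<rho> t)^4 * 4) * R / \<kappa>) (at t)"
    using dA0 unfolding id_dA .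
  have dP0: "((\<lambda>t. (D^4 * (\<rho> t)^4 * (4 * \<rho> t - 1) / \<kappa>) powr (1/8)) has_real_derivative
      ((D^4 * (\<rho> t)^4 * (4 * \<rho> t - 1) / \<kappa>) powr (1/8)) *
       (0 * ln (D^4 * (\<rho> t)^4 * (4 * \<rho> t - 1) / \<kappa>) +
        D^4 * (4 * (\<rho> t)^3 * (4 * \<rho> t - 1) + (\<rho> t)^4 * 4) * R / \<kappa> * (1/8) /
        (D^4 * (\<rho> t)^4 * (4 * \<rho> t - 1) / \<kappa>))) (at t)"
    by (rule DERIV_powr[OF dA Apos DERIV_const])
  define P' where "P' = P (\<rho> t) * (0 * ln (D^4 * (\<rho> t)^4 * (4 * \<rho> t - 1) / \<kappa>) +
        D^4 * (4 * (\<rho> t)^3 * (4 * \<rho> t - 1) + (\<rho> t)^4 * 4) * R / \<kappa> * (1/8) /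
        (D^4 * (\<rho> t)^4 * (4 * \<rho> t - 1) / \<kappa>))"
  have dP: "((\<lambda>t. P (\<rho> t)) has_real_derivative P') (at t)"
    using dP0 unfolding P'_def Pdef by simp
  have P'eq: "P' = P (\<rho> t) * (0 * ln (D^4 * (\<rho> t)^4 * (4 * \<rho> t - 1) / \<kappa>) +
        (D^4 * (4 * (\<rho> t)^3 * (4 * \<rho> t - 1) + (\<rho> t)^4 * 4) * ((1 - \<rho> t) * ((\<rho> t)^3 * (4 * \<rho> t - 1) / (3 * (P (\<rho> t))^2))) / \<kappa>) * (1/8) /
        (D^4 * (\<rho> t)^4 * (4 * \<rho> t - 1) / \<kappa>))"
    unfolding P'_def R_def by simp
  show "((\<lambda>t. P (\<rho> t)) has_real_derivative
           - (1 / (6 * D^2)) * ((P (\<rho> t))^2 * (5 * P (\<rho> t) - P (\<rho> t) / \<rho> t) * (P (\<rho> t) - P (\<rho> t) / \<rho> t)) * (D * (\<rho> t)^2 / (P (\<rho> t))^3)^2 * P (\<rho> t)) (at t)"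
    using dP unfolding P'eq id_ex_x[OF ne] .
  have dy0: "((\<lambda>t. P (\<rho> t) / \<rho> t) has_real_derivative (P' * \<rho> t - P (\<rho> t) * R) / (\<rho> t * \<rho> t)) (at t)"
    by (rule DERIV_divide[OF dP d\<rho>[folded R_def] ne(2)])
  show "((\<lambda>t. P (\<rho> t) / \<rho> t) has_real_derivative
           - (1 / (6 * D^2)) * (- ((P (\<rho> t))^2 * (P (\<rho> t) / \<rho> t - P (\<rho> t)) * (P (\<rho> t) / \<rho> t - 3 * P (\<rho> t)))) * (D * (\<rho> t)^2 / (P (\<rho> t))^3)^2 * (P (\<rho> t) / \<rho> t)) (at t)"
    using dy0 unfolding R_def id_ex_y[OF ne P'eq] .
  have dw0: "((\<lambda>t. D * (\<rho> t)^2 / (P (\<rho> t))^3) has_real_derivative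
     (D * (of_nat 2 * (R * (\<rho> t)^(2 - Suc 0))) * (P (\<rho> t))^3 - D * (\<rho> t)^2 * (of_nat 3 * (P' * (P (\<rho> t))^(3 - Suc 0)))) / ((P (\<rho> t))^3 * (P (\<rho> t))^3)) (at t)"
    using ne(1) by (intro DERIV_divide[OF DERIV_cmult[OF DERIV_power[OF d\<rho>[folded R_def]]] DERIV_power[OF dP]]) simp
  show "((\<lambda>t. D * (\<rho> t)^2 / (P (\<rho> t))^3) has_real_derivative
           - (1 / (6 * D^2)) * ((P (\<rho> t))^2 * (P (\<rho> t) - P (\<rho> t) / \<rho> t)^2) * (D * (\<rho> t)^2 / (P (\<rho> t))^3)^3) (at t)"
    using dw0 unfolding R_def id_ex_w[OF ne P'eq] .
qed

lemma reduced_exists: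
  fixes w0 x0 y0 D \<beta> :: real
  assumes pos: "w0 > 0" "x0 > 0" "y0 > 0" and ne: "x0 \<noteq> y0" and q4: "y0 < 4 * x0"
    and Ddef: "D = w0 * x0 * y0^2" and \<beta>def: "\<beta> = 1 / (6 * D^2)"
  shows "\<exists>w x y. w 0 = w0 \<and> x 0 = x0 \<and> y 0 = y0 \<and> (\<forall>t\<ge>0.
     (w has_real_derivative (- \<beta> * (x t^2 * (x t - y t)^2) * (w t)^3)) (at t) \<and>
     (x has_real_derivative (- \<beta> * (x t^2 * (5 * x t - y t) * (x t - y t)) * (w t)^2 * x t)) (at t) \<and>
     (y has_real_derivative (- \<beta> * (- (x t^2 * (y t - x t) * (y t - 3 * x t))) * (w t)^2 * y t)) (at t))"
proof -
  define \<kappa> where "\<kappa> = w0^4 * y0^3 * (4 * x0 - y0)"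
  have Dpos: "D > 0" using pos Ddef by simp
  have \<kappa>pos: "\<kappa> > 0" using pos q4 unfolding \<kappa>_def by simp
  define P where "P = (\<lambda>s. (D^4 * s^4 * (4 * s - 1) / \<kappa>) powr (1/8))"
  define G where "G = (\<lambda>s. s^3 * (4 * s - 1) / (3 * (P s)^2))"
  have Ppos: "P s > 0" if "s > 1/4" for s using that Dpos \<kappa>pos unfolding P_def by simp
  have cG: "continuous_on {1/4<..} G"
  proof -
    have "continuous_on {1/4<..} P"
      unfolding P_def using Dpos \<kappa>pos by (intro continuous_intros) auto
    moreover have "\<forall>s\<in>{1/4<..}. 3 * (P s)^2 \<noteq> 0" using Ppos by fastforce
    ultimately show ?thesis unfolding G_def by (intro continuous_intros) auto
  qed
  have Gpos: "G s > 0" if "s > 1/4" for s using that Ppos[OF that] unfolding G_def by simp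
  define r0 where "r0 = x0 / y0"
  have r0q: "r0 > 1/4" using pos q4 unfolding r0_def by (simp add: field_simps)
  have r0ne: "r0 \<noteq> 1" using pos ne unfolding r0_def by simp
  have "\<exists>\<rho>. \<rho> 0 = r0 \<and> (\<forall>t\<ge>0. \<rho> t > 1/4 \<and> (\<rho> has_real_derivative (1 - \<rho> t) * G (\<rho> t)) (at t))"
  proof (cases "r0 < 1")
    case True
    define a where "a = (r0 + 1/4) / 2"
    have a: "a < r0" "a > 1/4" using r0q unfolding a_def by auto
    have "continuous_on {a..1} G" by (rule continuous_on_subset[OF cG]) (use a in auto)
    moreover have "\<And>s. a \<le> s \<Longrightarrow> s \<le> 1 \<Longrightarrow> G s > 0" using Gpos a by simp
    ultimately obtain \<rho> where \<rho>: "\<rho> 0 = r0" "\<forall>t\<ge>0. r0 \<le> \<rho> t \<and> \<rho> t < 1 \<and>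
            (\<rho> has_real_derivative (1 - \<rho> t) * G (\<rho> t)) (at t)"
      using scalar_ode_inc[OF a(1) True, of G] by blast
    show ?thesis using \<rho> r0q by (intro exI[of _ \<rho>]) force
  next
    case False
    then have r1: "r0 > 1" using r0ne by simp
    define G' where "G' = (\<lambda>s. G (- s))"
    have "continuous_on {-r0-1 .. -1} G'"
      unfolding G'_def by (rule continuous_on_compose2[OF cG continuous_on_minus[OF continuous_on_id]]) auto
    moreover have "\<And>s. -r0-1 \<le> s \<Longrightarrow> s \<le> -1 \<Longrightarrow> G' s > 0" unfolding G'_def using Gpos by simp
    moreover have "-r0-1 < -r0" "-r0 < -1" using r1 by auto
    ultimately obtain \<rho>' where \<rho>': "\<rho>' 0 = -r0" "\<forall>t\<ge>0. -r0 \<le> \<rho>' t \<and> \<rho>' t < -1 \<and>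
            (\<rho>' has_real_derivative (-1 - \<rho>' t) * G' (\<rho>' t)) (at t)"
      using scalar_ode_inc[of "-r0-1" "-r0" "-1" G'] by blast
    have "\<forall>t\<ge>0. (\<lambda>t. - \<rho>' t) t > 1/4 \<and> ((\<lambda>t. - \<rho>' t) has_real_derivative (1 - (- \<rho>' t)) * G (- \<rho>' t)) (at t)"
    proof (intro allI impI conjI)
      fix t :: real assume t: "t \<ge> 0"
      show "(\<lambda>t. - \<rho>' t) t > 1/4" using \<rho>' t by auto
      have "((\<lambda>t. - \<rho>' t) has_real_derivative - ((-1 - \<rho>' t) * G' (\<rho>' t))) (at t)"
        using \<rho>' t by (intro DERIV_minus) auto
      then show "((\<lambda>t. - \<rho>' t) has_real_derivative (1 - (- \<rho>' t)) * G (- \<rho>' t)) (at t)"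
        unfolding G'_def by (simp add: algebra_simps)
    qed
    then show ?thesis using \<rho>' by (intro exI[of _ "\<lambda>t. - \<rho>' t"]) simp
  qed
  then obtain \<rho> where \<rho>0: "\<rho> 0 = r0" and \<rho>: "\<forall>t\<ge>0. \<rho> t > 1/4 \<and> (\<rho> has_real_derivative (1 - \<rho> t) * G (\<rho> t)) (at t)"
    by blast
  define x where "x = (\<lambda>t. P (\<rho> t))"
  define y where "y = (\<lambda>t. P (\<rho> t) / \<rho> t)"
  define w where "w = (\<lambda>t. D * (\<rho> t)^2 / (P (\<rho> t))^3)"
  have \<kappa>eq: "x0^8 * \<kappa> = D^4 * r0^4 * (4 * r0 - 1)"
    using id_x8[of w0 x0 y0] pos unfolding \<kappa>_def Ddef r0_def by simp
  have Pr0: "P r0 = x0"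
  proof -
    have "D^4 * r0^4 * (4 * r0 - 1) / \<kappa> = x0^8" using \<kappa>eq \<kappa>pos by (simp add: field_simps)
    then show ?thesis unfolding P_def using root8[OF pos(2)] by simp
  qed
  have x0': "x 0 = x0" unfolding x_def using \<rho>0 Pr0 by simp
  have y0': "y 0 = y0" unfolding y_def using \<rho>0 Pr0 pos unfolding r0_def by simp
  have w0': "w 0 = w0"
  proof -
    have "P (\<rho> 0) = x0" "\<rho> 0 = x0 / y0" using \<rho>0 Pr0 unfolding r0_def by auto
    then have "w 0 = w0 * x0 * y0^2 * (x0 / y0)^2 / x0^3" unfolding w_def Ddef by simp
    also have "\<dots> = w0" using pos by (simp add: field_simps power2_eq_square power3_eq_cube)
    finally show ?thesis .
  qed
  have derivs: "\<forall>t\<ge>0.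
     (w has_real_derivative (- \<beta> * (x t^2 * (x t - y t)^2) * (w t)^3)) (at t) \<and>
     (x has_real_derivative (- \<beta> * (x t^2 * (5 * x t - y t) * (x t - y t)) * (w t)^2 * x t)) (at t) \<and>
     (y has_real_derivative (- \<beta> * (- (x t^2 * (y t - x t) * (y t - 3 * x t))) * (w t)^2 * y t)) (at t)"
  proof (intro allI impI)
    fix t :: real assume t: "t \<ge> 0"
    have d\<rho>: "(\<rho> has_real_derivative (1 - \<rho> t) * ((\<rho> t)^3 * (4 * \<rho> t - 1) / (3 * (P (\<rho> t))^2))) (at t)"
      using \<rho> t unfolding G_def by simp
    have s: "\<rho> t > 1/4" using \<rho> t by simp
    note E = ex_derivs[OF P_def d\<rho> s Dpos \<kappa>pos]
    show "(w has_real_derivative (- \<beta> * (x t^2 * (x t - y t)^2) * (w t)^3)) (at t) \<and>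
     (x has_real_derivative (- \<beta> * (x t^2 * (5 * x t - y t) * (x t - y t)) * (w t)^2 * x t)) (at t) \<and>
     (y has_real_derivative (- \<beta> * (- (x t^2 * (y t - x t) * (y t - 3 * x t))) * (w t)^2 * y t)) (at t)"
      unfolding x_def y_def w_def \<beta>def using E by simp
  qed
  show ?thesis using x0' y0' w0' derivs by blast
qed




lemma p_xyy: "bach_p x y y = x^2 * (x - y)^2" unfolding bach_p_def by algebra
lemma p_yyx: "bach_p y y x = x^2 * (x - y)^2" unfolding bach_p_def by algebra
lemma q_xyy: "bach_q x y y = x^2 * (5 * x - y) * (x - y)" unfolding bach_q_def by algebra
lemma q_yyx: "bach_q y y x = - (x^2 * (y - x) * (y - 3 * x))" unfolding bach_q_def by algebra
lemma q_yxy: "bach_q y x y = - (x^2 * (y - x) * (y - 3 * x))" unfolding bach_q_def by algebra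

definition Psi :: "real \<Rightarrow> real \<Rightarrow> real \<Rightarrow> real" where
  "Psi a b c = 5*a^4 + 5*a^3*b - 3*a^3*c + 4*a^2*b^2 - 5*a^2*b*c + 5*a*b^3 - 5*a*b^2*c - a*b*c^2 + a*c^3 + 5*b^4 - 3*b^3*c + b*c^3 - 3*c^4"

lemma qdiff: "bach_q a b c * a - bach_q b c a * b = (a - b) * Psi a b c"
  unfolding bach_q_def Psi_def by algebra

lemma diff_form: "- \<beta> * bach_q a b c * w^2 * a - (- \<beta> * bach_q b c a * w^2 * b) = (- \<beta> * w^2 * Psi a b c) * (a - b)"
proof -
  have "- \<beta> * bach_q a b c * w^2 * a - (- \<beta> * bach_q b c a * w^2 * b)
      = - \<beta> * w^2 * (bach_q a b c * a - bach_q b c a * b)" by (simp add: algebra_simps)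
  also have "\<dots> = (- \<beta> * w^2 * Psi a b c) * (a - b)" unfolding qdiff by simp
  finally show ?thesis .
qed

lemma eq_from_diff:
  fixes g0 ga gb gc :: "real \<Rightarrow> real" and \<beta> :: real
  assumes da: "\<forall>t\<ge>0. (ga has_real_derivative (- \<beta> * bach_q (ga t) (gb t) (gc t) * (g0 t)^2 * ga t)) (at t within {0..})"
    and db: "\<forall>t\<ge>0. (gb has_real_derivative (- \<beta> * bach_q (gb t) (gc t) (ga t) * (g0 t)^2 * gb t)) (at t within {0..})"
    and c0: "continuous_on {0..} g0" and ca: "continuous_on {0..} ga"
    and cb: "continuous_on {0..} gb" and cc: "continuous_on {0..} gc"
    and e0: "ga 0 = gb 0"
  shows "\<forall>t\<ge>0. ga t = gb t"
proof -
  have "\<forall>t\<ge>0. ((\<lambda>t. ga t - gb t) has_real_derivative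
     (- \<beta> * bach_q (ga t) (gb t) (gc t) * (g0 t)^2 * ga t) - (- \<beta> * bach_q (gb t) (gc t) (ga t) * (g0 t)^2 * gb t))
     (at t within {0..})"
  proof (intro allI impI)
    fix t :: real assume t: "t \<ge> 0"
    show "((\<lambda>t. ga t - gb t) has_real_derivative
     (- \<beta> * bach_q (ga t) (gb t) (gc t) * (g0 t)^2 * ga t) - (- \<beta> * bach_q (gb t) (gc t) (ga t) * (g0 t)^2 * gb t))
     (at t within {0..})"
      by (rule DERIV_diff[OF da[rule_format, OF t] db[rule_format, OF t]])
  qed
  then have "\<forall>t\<ge>0. ((\<lambda>t. ga t - gb t) has_real_derivative
     (- \<beta> * (g0 t)^2 * Psi (ga t) (gb t) (gc t)) * (ga t - gb t)) (at t within {0..})"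
    by (rule deriv_eq_all) (rule diff_form)
  moreover have "continuous_on {0..} (\<lambda>t. - \<beta> * (g0 t)^2 * Psi (ga t) (gb t) (gc t))"
    unfolding Psi_def by (intro continuous_intros c0 ca cb cc)
  ultimately have "\<forall>t\<ge>0. (ga 0 - gb 0 > 0 \<longrightarrow> ga t - gb t > 0) \<and> (ga 0 - gb 0 < 0 \<longrightarrow> ga t - gb t < 0)
     \<and> (ga 0 - gb 0 = 0 \<longrightarrow> ga t - gb t = 0)"
    by (rule sign_of_lin)
  then show ?thesis using e0 by auto
qed

lemma strict_mono_on_cong0:
  assumes "strict_mono_on {0..} f" "\<forall>t\<ge>0. g t = f t"
  shows "strict_mono_on {0..} (g :: real \<Rightarrow> real)"
  using assms unfolding monotone_on_def by auto

lemma tendsto_cong0: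
  assumes "(f \<longlongrightarrow> l) at_top" "\<forall>t\<ge>0. g t = f t"
  shows "((g :: real \<Rightarrow> real) \<longlongrightarrow> l) at_top"
proof -
  have "eventually (\<lambda>t::real. t \<ge> 0) at_top" unfolding eventually_at_top_linorder by auto
  then have "eventually (\<lambda>t. f t = g t) at_top" by (rule eventually_mono) (use assms(2) in auto)
  then show ?thesis using assms(1) by (rule Lim_transform_eventually[rotated])
qed

theorem theorem5p17:
  fixes h0 h1 h2 h3 :: real
  assumes pos: "h0 > 0" "h1 > 0" "h2 > 0" "h3 > 0"
    and cases: "(h1 = h2 \<and> h2 < h3) \<or> (h1 < h2 \<and> h2 = h3 \<and> h3 < 4 * h1)"
  defines "dh \<equiv> h0 * h1 * h2 * h3"
  defines "\<kappa> \<equiv> (4 * dh - h0 * h2^3) * h0^3 * h2"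
  shows "(\<exists>g0 g1 g2 g3. solves_S3 h0 h1 h2 h3 g0 g1 g2 g3) \<and>
    (\<forall>g0 g1 g2 g3. solves_S3 h0 h1 h2 h3 g0 g1 g2 g3 \<longrightarrow>
       (\<forall>t\<ge>0. (4 * dh - g0 t * (g2 t)^3) * (g0 t)^3 * g2 t = \<kappa>) \<and>
       (g0 \<longlongrightarrow> (\<kappa> / 3) powr (3/8) * dh powr (-1/2)) at_top \<and>
       (g1 \<longlongrightarrow> (3 / \<kappa>) powr (1/8) * dh powr (1/2)) at_top \<and>
       (g2 \<longlongrightarrow> (3 / \<kappa>) powr (1/8) * dh powr (1/2)) at_top \<and>
       (g3 \<longlongrightarrow> (3 / \<kappa>) powr (1/8) * dh powr (1/2)) at_top \<and>
       (h1 = h2 \<longrightarrow> strict_mono_on {0..} g1 \<and> strict_mono_on {0..} g2 \<and>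
                     strict_antimono_on {0..} g3) \<and>
       (h2 = h3 \<longrightarrow> strict_mono_on {0..} g1))"
proof -
  define \<beta> where "\<beta> = bach_beta (h0 * h1 * h2 * h3)"
  have \<beta>dh: "\<beta> = 1 / (6 * dh^2)" unfolding \<beta>_def bach_beta_def dh_def by simp
  have ex: "\<exists>g0 g1 g2 g3. solves_S3 h0 h1 h2 h3 g0 g1 g2 g3"
  proof (cases "h1 = h2 \<and> h2 < h3")
    case True
    have D: "dh = h0 * h3 * h2^2" unfolding dh_def using True by (simp add: power2_eq_square)
    obtain w x y where wxy: "w 0 = h0" "x 0 = h3" "y 0 = h2" and
      d: "\<forall>t\<ge>0.
     (w has_real_derivative (- \<beta> * (x t^2 * (x t - y t)^2) * (w t)^3)) (at t) \<and>
     (x has_real_derivative (- \<beta> * (x t^2 * (5 * x t - y t) * (x t - y t)) * (w t)^2 * x t)) (at t) \<and>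
     (y has_real_derivative (- \<beta> * (- (x t^2 * (y t - x t) * (y t - 3 * x t))) * (w t)^2 * y t)) (at t)"
      using reduced_exists[OF pos(1) pos(4) pos(3) _ _ D \<beta>dh] True pos by force
    have "solves_S3 h0 h1 h2 h3 w y y x"
      unfolding solves_S3_def Let_def \<beta>_def[symmetric] p_yyx q_yyx q_yxy q_xyy
      using wxy True d by (auto intro: has_field_derivative_at_within)
    then show ?thesis by blast
  next
    case False
    then have B: "h1 < h2" "h2 = h3" "h3 < 4 * h1" using cases by auto
    have D: "dh = h0 * h1 * h2^2" unfolding dh_def using B by (simp add: power2_eq_square)
    obtain w x y where wxy: "w 0 = h0" "x 0 = h1" "y 0 = h2" and
      d: "\<forall>t\<ge>0.
     (w has_real_derivative (- \<beta> * (x t^2 * (x t - y t)^2) * (w t)^3)) (at t) \<and>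
     (x has_real_derivative (- \<beta> * (x t^2 * (5 * x t - y t) * (x t - y t)) * (w t)^2 * x t)) (at t) \<and>
     (y has_real_derivative (- \<beta> * (- (x t^2 * (y t - x t) * (y t - 3 * x t))) * (w t)^2 * y t)) (at t)"
      using reduced_exists[OF pos(1) pos(2) pos(3) _ _ D \<beta>dh] B pos by force
    have "solves_S3 h0 h1 h2 h3 w x y y"
      unfolding solves_S3_def Let_def \<beta>_def[symmetric] p_xyy q_yyx q_yxy q_xyy
      using wxy B d by (auto intro: has_field_derivative_at_within)
    then show ?thesis by blast
  qed
  have all: "(\<forall>t\<ge>0. (4 * dh - g0 t * (g2 t)^3) * (g0 t)^3 * g2 t = \<kappa>) \<and>
       (g0 \<longlongrightarrow> (\<kappa> / 3) powr (3/8) * dh powr (-1/2)) at_top \<and>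
       (g1 \<longlongrightarrow> (3 / \<kappa>) powr (1/8) * dh powr (1/2)) at_top \<and>
       (g2 \<longlongrightarrow> (3 / \<kappa>) powr (1/8) * dh powr (1/2)) at_top \<and>
       (g3 \<longlongrightarrow> (3 / \<kappa>) powr (1/8) * dh powr (1/2)) at_top \<and>
       (h1 = h2 \<longrightarrow> strict_mono_on {0..} g1 \<and> strict_mono_on {0..} g2 \<and>
                     strict_antimono_on {0..} g3) \<and>
       (h2 = h3 \<longrightarrow> strict_mono_on {0..} g1)"
    if S: "solves_S3 h0 h1 h2 h3 g0 g1 g2 g3" for g0 g1 g2 g3
  proof -
    have i: "g0 0 = h0" "g1 0 = h1" "g2 0 = h2" "g3 0 = h3"
      using S unfolding solves_S3_def Let_def by auto
    have d0: "\<forall>t\<ge>0. (g0 has_real_derivative (- \<beta> * bach_p (g1 t) (g2 t) (g3 t) * (g0 t)^3)) (at t within {0..})"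
      and d1: "\<forall>t\<ge>0. (g1 has_real_derivative (- \<beta> * bach_q (g1 t) (g2 t) (g3 t) * (g0 t)^2 * g1 t)) (at t within {0..})"
      and d2: "\<forall>t\<ge>0. (g2 has_real_derivative (- \<beta> * bach_q (g2 t) (g3 t) (g1 t) * (g0 t)^2 * g2 t)) (at t within {0..})"
      and d3: "\<forall>t\<ge>0. (g3 has_real_derivative (- \<beta> * bach_q (g3 t) (g1 t) (g2 t) * (g0 t)^2 * g3 t)) (at t within {0..})"
      using S unfolding solves_S3_def Let_def \<beta>_def[symmetric] by auto
    have c0: "continuous_on {0..} g0" using cont_from_deriv[OF d0] .
    have c1: "continuous_on {0..} g1" using cont_from_deriv[OF d1] .
    have c2: "continuous_on {0..} g2" using cont_from_deriv[OF d2] .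
    have c3: "continuous_on {0..} g3" using cont_from_deriv[OF d3] .
    show ?thesis
    proof (cases "h1 = h2 \<and> h2 < h3")
      case True
      have eq: "\<forall>t\<ge>0. g1 t = g2 t"
        by (rule eq_from_diff[OF d1 d2 c0 c1 c2 c3]) (use i True in simp)
      have dw: "\<forall>t\<ge>0. (g0 has_real_derivative (- \<beta> * (g3 t^2 * (g3 t - g1 t)^2) * (g0 t)^3)) (at t within {0..})"
        by (rule deriv_eq_all[OF d0]) (use eq in \<open>simp add: p_yyx\<close>)
      have dx: "\<forall>t\<ge>0. (g3 has_real_derivative (- \<beta> * (g3 t^2 * (5 * g3 t - g1 t) * (g3 t - g1 t)) * (g0 t)^2 * g3 t)) (at t within {0..})"
        by (rule deriv_eq_all[OF d3]) (use eq in \<open>simp add: q_xyy\<close>)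
      have dy: "\<forall>t\<ge>0. (g1 has_real_derivative (- \<beta> * (- (g3 t^2 * (g1 t - g3 t) * (g1 t - 3 * g3 t))) * (g0 t)^2 * g1 t)) (at t within {0..})"
        by (rule deriv_eq_all[OF d1]) (use eq in \<open>simp add: q_yyx\<close>)
      have Dd: "dh = g0 0 * g3 0 * (g1 0)^2" unfolding dh_def using i True by (simp add: power2_eq_square)
      have \<kappa>d: "\<kappa> = (4*dh - g0 0 * (g1 0)^3) * (g0 0)^3 * g1 0" unfolding \<kappa>_def using i True by simp
      have R: "(\<forall>t\<ge>0. (4*dh - g0 t * (g1 t)^3) * (g0 t)^3 * g1 t = \<kappa>) \<and>
        (g0 \<longlongrightarrow> (\<kappa>/3) powr (3/8) * dh powr (-1/2)) at_top \<and>
        (g3 \<longlongrightarrow> (3/\<kappa>) powr (1/8) * dh powr (1/2)) at_top \<and>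
        (g1 \<longlongrightarrow> (3/\<kappa>) powr (1/8) * dh powr (1/2)) at_top \<and>
        (g3 0 > g1 0 \<longrightarrow> strict_mono_on {0..} g1 \<and> strict_antimono_on {0..} g3) \<and>
        (g3 0 < g1 0 \<longrightarrow> strict_mono_on {0..} g3)"
        by (rule reduced_props[OF _ _ _ _ _ Dd \<beta>dh \<kappa>d dw dx dy]) (use i True pos in auto)
      have gt: "g3 0 > g1 0" using i True by simp
      show ?thesis
        using R gt eq True
        by (auto intro: tendsto_cong0 strict_mono_on_cong0)
    next
      case False
      then have B: "h1 < h2" "h2 = h3" "h3 < 4 * h1" using cases by auto
      have eq: "\<forall>t\<ge>0. g2 t = g3 t"
        by (rule eq_from_diff[OF d2 d3 c0 c2 c3 c1]) (use i B in simp)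
      have dw: "\<forall>t\<ge>0. (g0 has_real_derivative (- \<beta> * (g1 t^2 * (g1 t - g2 t)^2) * (g0 t)^3)) (at t within {0..})"
        by (rule deriv_eq_all[OF d0]) (use eq in \<open>simp add: p_xyy\<close>)
      have dx: "\<forall>t\<ge>0. (g1 has_real_derivative (- \<beta> * (g1 t^2 * (5 * g1 t - g2 t) * (g1 t - g2 t)) * (g0 t)^2 * g1 t)) (at t within {0..})"
        by (rule deriv_eq_all[OF d1]) (use eq in \<open>simp add: q_xyy\<close>)
      have dy: "\<forall>t\<ge>0. (g2 has_real_derivative (- \<beta> * (- (g1 t^2 * (g2 t - g1 t) * (g2 t - 3 * g1 t))) * (g0 t)^2 * g2 t)) (at t within {0..})"
        by (rule deriv_eq_all[OF d2]) (use eq in \<open>simp add: q_yyx\<close>)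
      have Dd: "dh = g0 0 * g1 0 * (g2 0)^2" unfolding dh_def using i B by (simp add: power2_eq_square)
      have \<kappa>d: "\<kappa> = (4*dh - g0 0 * (g2 0)^3) * (g0 0)^3 * g2 0" unfolding \<kappa>_def using i by simp
      have R: "(\<forall>t\<ge>0. (4*dh - g0 t * (g2 t)^3) * (g0 t)^3 * g2 t = \<kappa>) \<and>
        (g0 \<longlongrightarrow> (\<kappa>/3) powr (3/8) * dh powr (-1/2)) at_top \<and>
        (g1 \<longlongrightarrow> (3/\<kappa>) powr (1/8) * dh powr (1/2)) at_top \<and>
        (g2 \<longlongrightarrow> (3/\<kappa>) powr (1/8) * dh powr (1/2)) at_top \<and>
        (g1 0 > g2 0 \<longrightarrow> strict_mono_on {0..} g2 \<and> strict_antimono_on {0..} g1) \<and>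
        (g1 0 < g2 0 \<longrightarrow> strict_mono_on {0..} g1)"
        by (rule reduced_props[OF _ _ _ _ _ Dd \<beta>dh \<kappa>d dw dx dy]) (use i B pos in auto)
      have lt: "g1 0 < g2 0" using i B by simp
      have g3l: "(g3 \<longlongrightarrow> (3/\<kappa>) powr (1/8) * dh powr (1/2)) at_top"
        using R eq by (auto intro: tendsto_cong0)
      show ?thesis
        using R lt g3l B by auto
    qed
  qed
  show ?thesis using ex all by blast
qed


end
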